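(* For $Y\in\mathfrak o(V,K)$ and $y\in V$ let $\mu_{Y,y}\in\mathfrak g^*$ be the functional $Z\mapsto\langle (Y,y^* )\,|\,Z\rangle$ on $\mathfrak g$. Then the assignment $(Y,y)\mapsto\mu_{Y,y}$ induces a well-defined bijection from the set of special cotypes (equivalence classes of special tuples) onto the set of coadjoint orbits of $G$ in $\mathfrak g^*$; that is: every element of $\mathfrak g^*$ is of the form $\mu_{Y,y}$, and two special tuples $(Y,y)$, $(Y',y')$ are equivalent if and only if $\mu_{Y,y}$ and $\mu_{Y',y'}$ lie in the same $G$-coadjoint orbit, where $G$ acts on $\mathfrak g^*$ by $(g\cdot\mu)(Z)=\mu(g^{-1}Zg)$.
   Context: Let $n\ge 0$ be an integer and let $\widetilde K$ be a real symmetric $n\times n$ matrix with $\widetilde K^2=I_n$. Let $V=\mathbb R^{n+2}$ with standard basis $e_1,\dots,e_{n+2}$, and let $K=\begin{pmatrix}0&0&1\\0&\widetilde K&0\\1&0&0\end{pmatrix}$ (block sizes $1,n,1$). For $x,w\in V$ write $x^*=x^TK$ (a row vector) and $L_{u,w}=u\,w^*-w\,u^*$. Let $O(V,K)=\{P:P^TKP=K\}$, $\mathfrak o(V,K)=\{X:X^TK+KX=0\}$, and $O(V,K)_{e_{n+2}}=\{P\in O(V,K):Pe_{n+2}=e_{n+2}\}$. Let $\mathfrak g^\vee$ be the space of $(n+3)\times(n+3)$ matrices $(X,x^* ):=\begin{pmatrix}0&x^*\\0&X\end{pmatrix}$ with $X\in\mathfrak o(V,K)$, $x\in V$, with bilinear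 form $\langle (X,x^* )\,|\,(\overline X,\overline x^{\,*})\rangle=\tfrac12\mathrm{tr}(X\overline X)+\overline x^{\,T}Kx$. Let $G$ be the group (generalized Galilei group) of matrices $\begin{pmatrix}1&p^*\\0&P\end{pmatrix}$ with $P\in O(V,K)_{e_{n+2}}$ and $p\in V$ with $p^*(e_{n+2})=0$, and let $\mathfrak g$ be its Lie algebra, the matrices $(X,x^* )\in\mathfrak g^\vee$ with $Xe_{n+2}=0$ and $x^*(e_{n+2})=0$. A special tuple is a pair $(Y,y)$ (written $(V,Y,y;K)$ in the paper) with $Y\in\mathfrak o(V,K)$, $y\in V$. Two special tuples $(Y,y)$ and $(Y',y')$ are equivalent if there exist $P\in O(V,K)_{e_{n+2}}$, vectors $v,p\in V$ with $p^*(e_{n+2})=0$, and $v_0\in\mathbb R$ such that $Y'+L_{v,e_{n+2}}=P(Y+L_{p,y})P^{-1}$ and $y'=Py+v_0e_{n+2}$. A special cotype is an equivalence class of special tuples. *)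

theory Defs
  imports "Jordan_Normal_Form.Matrix"
begin

(* V = R^(n+2), coordinates indexed 0..n+1; e_1 is index 0, e_(n+2) is index n+1.
   Matrices acting on g^vee are (n+3)x(n+3), indexed 0..n+2. *)

definition Kmat :: "nat \<Rightarrow> real mat \<Rightarrow> real mat" where
  "Kmat n Kt = mat (n+2) (n+2) (\<lambda>(i,j).
      if i = 0 \<and> j = n+1 then 1
      else if i = n+1 \<and> j = 0 then 1
      else if 1 \<le> i \<and> i \<le> n \<and> 1 \<le> j \<and> j \<le> n then Kt $$ (i-1, j-1)
      else 0)"

definition mtrace :: "real mat \<Rightarrow> real" where
  "mtrace A = (\<Sum>i<dim_row A. A $$ (i,i))"

definition elast :: "nat \<Rightarrow> real vec" where
  "elast n = unit_vec (n+2) (n+1)"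

(* xstar = x^T K, stored as a vector (the entries of the row vector) *)
definition xstar :: "real mat \<Rightarrow> real vec \<Rightarrow> real vec" where
  "xstar K x = transpose_mat K *\<^sub>v x"

definition Lop :: "real mat \<Rightarrow> real vec \<Rightarrow> real vec \<Rightarrow> real mat" where
  "Lop K u w = mat (dim_vec u) (dim_vec u)
      (\<lambda>(i,j). u $ i * xstar K w $ j - w $ i * xstar K u $ j)"

definition orth_grp :: "nat \<Rightarrow> real mat \<Rightarrow> real mat set" where
  "orth_grp N K = {P \<in> carrier_mat N N. transpose_mat P * K * P = K}"

definition orth_alg :: "nat \<Rightarrow> real mat \<Rightarrow> real mat set" where
  "orth_alg N K = {X \<in> carrier_mat N N. transpose_mat X * K + K * X = 0\<^sub>m N N}"

definition gvee_mat :: "nat \<Rightarrow> real mat \<Rightarrow> real mat \<Rightarrow> real vec \<Rightarrow> real mat" where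
  "gvee_mat n K X x = four_block_mat (0\<^sub>m 1 1) (mat_of_row (xstar K x)) (0\<^sub>m (n+2) 1) X"

definition galg :: "nat \<Rightarrow> real mat \<Rightarrow> real mat set" where
  "galg n K = {gvee_mat n K X x | X x. X \<in> orth_alg (n+2) K \<and> x \<in> carrier_vec (n+2)
                 \<and> X *\<^sub>v elast n = 0\<^sub>v (n+2) \<and> xstar K x \<bullet> elast n = 0}"

definition ggrp :: "nat \<Rightarrow> real mat \<Rightarrow> real mat set" where
  "ggrp n K = {four_block_mat (1\<^sub>m 1) (mat_of_row (xstar K p)) (0\<^sub>m (n+2) 1) P | P p.
                 P \<in> orth_grp (n+2) K \<and> P *\<^sub>v elast n = elast n
                 \<and> p \<in> carrier_vec (n+2) \<and> xstar K p \<bullet> elast n = 0}"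

definition lr_block :: "nat \<Rightarrow> real mat \<Rightarrow> real mat" where
  "lr_block n Z = mat (n+2) (n+2) (\<lambda>(i,j). Z $$ (i+1, j+1))"

definition top_row :: "nat \<Rightarrow> real mat \<Rightarrow> real vec" where
  "top_row n Z = vec (n+2) (\<lambda>j. Z $$ (0, j+1))"

(* mu_{Y,y}(Z) = <(Y,ystar) | (Xbar, xbarstar)> = 1/2 tr(Y Xbar) + xbar^T K y = 1/2 tr(Y Xbar) + xbarstar(y) *)
definition mu :: "nat \<Rightarrow> real mat \<Rightarrow> real vec \<Rightarrow> real mat \<Rightarrow> real" where
  "mu n Y y Z = 1/2 * mtrace (Y * lr_block n Z) + top_row n Z \<bullet> y"

definition special_equiv :: "nat \<Rightarrow> real mat \<Rightarrow> real mat \<Rightarrow> real vec \<Rightarrow> real mat \<Rightarrow> real vec \<Rightarrow> bool" where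
  "special_equiv n K Y y Y' y' \<longleftrightarrow>
     (\<exists>P Pinv v p v0. P \<in> orth_grp (n+2) K \<and> P *\<^sub>v elast n = elast n
        \<and> Pinv \<in> carrier_mat (n+2) (n+2) \<and> P * Pinv = 1\<^sub>m (n+2) \<and> Pinv * P = 1\<^sub>m (n+2)
        \<and> v \<in> carrier_vec (n+2) \<and> p \<in> carrier_vec (n+2) \<and> xstar K p \<bullet> elast n = 0
        \<and> Y' + Lop K v (elast n) = P * (Y + Lop K p y) * Pinv
        \<and> y' = P *\<^sub>v y + v0 \<cdot>\<^sub>v elast n)"

definition same_coadj_orbit :: "nat \<Rightarrow> real mat \<Rightarrow> (real mat \<Rightarrow> real) \<Rightarrow> (real mat \<Rightarrow> real) \<Rightarrow> bool" where
  "same_coadj_orbit n K f f' \<longleftrightarrow>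
     (\<exists>g ginv. g \<in> ggrp n K \<and> ginv \<in> carrier_mat (n+3) (n+3)
        \<and> g * ginv = 1\<^sub>m (n+3) \<and> ginv * g = 1\<^sub>m (n+3)
        \<and> (\<forall>Z \<in> galg n K. f' Z = f (ginv * Z * g)))"

(* elements of gstar: linear functionals on g (compared on g only) *)
definition lin_functional :: "nat \<Rightarrow> real mat \<Rightarrow> (real mat \<Rightarrow> real) \<Rightarrow> bool" where
  "lin_functional n K f \<longleftrightarrow>
     (\<forall>Z1 \<in> galg n K. \<forall>Z2 \<in> galg n K. f (Z1 + Z2) = f Z1 + f Z2)
     \<and> (\<forall>c. \<forall>Z \<in> galg n K. f (c \<cdot>\<^sub>m Z) = c * f Z)"

end

theory Submission
  imports Defs "Jordan_Normal_Form.Determinant"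
begin

declare add_2_eq_Suc' [simp del]

lemma Kmat_carrier: "Kmat n Kt \<in> carrier_mat (n+2) (n+2)"
  by (simp add: Kmat_def)

lemma Kmat_sym: assumes "Kt \<in> carrier_mat n n" "transpose_mat Kt = Kt"
  shows "transpose_mat (Kmat n Kt) = Kmat n Kt"
proof (rule eq_matI)
  fix i j assume ij: "i < dim_row (Kmat n Kt)" "j < dim_col (Kmat n Kt)"
  have "Kt $$ (j-1,i-1) = Kt $$ (i-1,j-1)" if "1 \<le> i" "i \<le> n" "1 \<le> j" "j \<le> n"
  proof -
    have "Kt $$ (j-1,i-1) = transpose_mat Kt $$ (i-1,j-1)" using assms(1) that by simp
    then show ?thesis by (subst (asm) assms(2))
  qed
  then show "transpose_mat (Kmat n Kt) $$ (i, j) = Kmat n Kt $$ (i, j)"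
    using ij by (auto simp: Kmat_def)
qed (auto simp: Kmat_def)

lemma sum_split3: "(\<Sum>k\<in>{0..<n+2}. F k) = F 0 + (\<Sum>k\<in>{0..<n}. F (Suc k)) + F (n+1)"
proof -
  have "(\<Sum>k\<in>{0..<n+2}. F k) = (\<Sum>k<Suc (Suc n). F k)" by (simp add: atLeast0LessThan add_2_eq_Suc')
  also have "\<dots> = (\<Sum>k<Suc n. F k) + F (n+1)" by simp
  also have "(\<Sum>k<Suc n. F k) = F 0 + (\<Sum>k<n. F (Suc k))" by (rule sum.lessThan_Suc_shift)
  finally show ?thesis by (simp add: atLeast0LessThan)
qed

lemma Kmat_sq: assumes "Kt \<in> carrier_mat n n" "Kt * Kt = 1\<^sub>m n"
  shows "Kmat n Kt * Kmat n Kt = 1\<^sub>m (n+2)"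
proof (rule eq_matI)
  fix i j assume ij: "i < dim_row (1\<^sub>m (n+2))" "j < dim_col (1\<^sub>m (n+2):: real mat)"
  let ?K = "Kmat n Kt"
  have "(?K * ?K) $$ (i,j) = (\<Sum>k\<in>{0..<n+2}. ?K $$ (i,k) * ?K $$ (k,j))"
    using ij by (simp add: Kmat_def scalar_prod_def)
  also have "\<dots> = ?K $$ (i,0) * ?K $$ (0,j) + (\<Sum>k\<in>{0..<n}. ?K $$ (i,Suc k) * ?K $$ (Suc k,j))
      + ?K $$ (i,n+1) * ?K $$ (n+1,j)" by (rule sum_split3)
  also have "\<dots> = 1\<^sub>m (n+2) $$ (i,j)"
  proof -
    have mid: "(\<Sum>k\<in>{0..<n}. ?K $$ (i,Suc k) * ?K $$ (Suc k,j)) =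
       (if 1 \<le> i \<and> i \<le> n \<and> 1 \<le> j \<and> j \<le> n then (Kt * Kt) $$ (i-1,j-1) else 0)"
    proof (cases "1 \<le> i \<and> i \<le> n \<and> 1 \<le> j \<and> j \<le> n")
      case True
      then have "(\<Sum>k\<in>{0..<n}. ?K $$ (i,Suc k) * ?K $$ (Suc k,j)) = (\<Sum>k\<in>{0..<n}. Kt $$ (i-1,k) * Kt $$ (k,j-1))"
        using ij by (intro sum.cong) (auto simp: Kmat_def)
      also have "\<dots> = (Kt * Kt) $$ (i-1,j-1)"
      proof -
        have "i-1 < n" "j-1 < n" using True by auto
        then show ?thesis using assms(1) by (subst index_mult_mat) (auto simp: scalar_prod_def)
      qed
      finally show ?thesis using True by simp
    next
      case False
      then have "\<forall>k\<in>{0..<n}. ?K $$ (i,Suc k) * ?K $$ (Suc k,j) = 0"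
        using ij by (auto simp: Kmat_def)
      then have "(\<Sum>k\<in>{0..<n}. ?K $$ (i,Suc k) * ?K $$ (Suc k,j)) = 0" by (rule sum.neutral)
      then show ?thesis using False by auto
    qed
    show ?thesis unfolding mid using ij assms by (auto simp: Kmat_def)
  qed
  finally show "(?K * ?K) $$ (i,j) = 1\<^sub>m (n+2) $$ (i,j)" .
qed (auto simp: Kmat_def)

locale KS = fixes n :: nat and K :: "real mat"
  assumes Kc: "K \<in> carrier_mat (n+2) (n+2)" and Ks: "transpose_mat K = K"
    and KK: "K * K = 1\<^sub>m (n+2)"
    and KL: "\<And>i. i < n+2 \<Longrightarrow> K $$ (i, n+1) = (if i = 0 then 1 else 0)"
    and LK: "\<And>j. j < n+2 \<Longrightarrow> K $$ (n+1, j) = (if j = 0 then 1 else 0)"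
begin

lemma xstar_eq: "xstar K x = K *\<^sub>v x"
  by (simp add: xstar_def Ks)

lemma elast_c[simp]: "elast n \<in> carrier_vec (n+2)" by (simp add: elast_def)

lemma dot_elast: "v \<in> carrier_vec (n+2) \<Longrightarrow> v \<bullet> elast n = v $ (n+1)"
  by (simp add: elast_def)

lemma Kv_c[simp]: "x \<in> carrier_vec (n+2) \<Longrightarrow> K *\<^sub>v x \<in> carrier_vec (n+2)"
  using Kc by simp

lemma Kv_last: assumes "x \<in> carrier_vec (n+2)" shows "(K *\<^sub>v x) $ (n+1) = x $ 0"
proof -
  have "(K *\<^sub>v x) $ (n+1) = (\<Sum>j\<in>{0..<n+2}. K $$ (n+1, j) * x $ j)"
    using Kc assms by (simp add: scalar_prod_def)
  also have "\<dots> = (\<Sum>j\<in>{0..<n+2}. (if j = 0 then x $ 0 else 0))"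
    by (rule sum.cong) (auto simp: LK[simplified])
  finally show ?thesis by simp
qed

lemma KKv: "x \<in> carrier_vec (n+2) \<Longrightarrow> K *\<^sub>v (K *\<^sub>v x) = x"
  using Kc KK by (simp flip: assoc_mult_mat_vec)

lemma K_elast: "K *\<^sub>v elast n = unit_vec (n+2) 0"
proof (rule eq_vecI)
  fix i assume i: "i < dim_vec (unit_vec (n+2) 0 :: real vec)"
  then have "(K *\<^sub>v elast n) $ i = K $$ (i, n+1)" using Kc by (simp add: elast_def)
  then show "(K *\<^sub>v elast n) $ i = unit_vec (n + 2) 0 $ i" using i KL by simp
qed (use Kc in simp)

lemma K_e0: "K *\<^sub>v unit_vec (n+2) 0 = elast n"
  using KKv[of "elast n"] K_elast by simp

lemma dot_sym: "x \<in> carrier_vec (n+2) \<Longrightarrow> y \<in> carrier_vec (n+2) \<Longrightarrow> (K *\<^sub>v x) \<bullet> y = x \<bullet> (K *\<^sub>v y)"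
  using transpose_vec_mult_scalar[OF Kc, of y x] Ks by simp

lemma oa_KX: assumes "X \<in> orth_alg (n+2) K" shows "K * X = - (transpose_mat X * K)"
proof -
  have X: "X \<in> carrier_mat (n+2) (n+2)" and e: "transpose_mat X * K + K * X = 0\<^sub>m (n+2) (n+2)"
    using assms by (auto simp: orth_alg_def)
  show ?thesis
  proof (rule eq_matI)
    fix i j assume ij: "i < dim_row (- (transpose_mat X * K))" "j < dim_col (- (transpose_mat X * K))"
    have "(transpose_mat X * K + K * X) $$ (i,j) = 0" using e ij X Kc by simp
    then show "(K * X) $$ (i, j) = (- (transpose_mat X * K)) $$ (i, j)" using ij X Kc by simp
  qed (use X Kc in auto)
qed

lemma oa_skew: assumes X: "X \<in> orth_alg (n+2) K" and u: "u \<in> carrier_vec (n+2)" and w: "w \<in> carrier_vec (n+2)"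
  shows "(K *\<^sub>v w) \<bullet> (X *\<^sub>v u) = - ((K *\<^sub>v u) \<bullet> (X *\<^sub>v w))"
proof -
  have Xc: "X \<in> carrier_mat (n+2) (n+2)" using X by (simp add: orth_alg_def)
  have "(K *\<^sub>v w) \<bullet> (X *\<^sub>v u) = w \<bullet> (K *\<^sub>v (X *\<^sub>v u))" using dot_sym Xc u w by simp
  also have "K *\<^sub>v (X *\<^sub>v u) = (K * X) *\<^sub>v u" using Kc Xc u by simp
  also have "\<dots> = - (transpose_mat X *\<^sub>v (K *\<^sub>v u))" using oa_KX[OF X] Kc Xc u by simp
  also have "w \<bullet> \<dots> = - (w \<bullet> (transpose_mat X *\<^sub>v (K *\<^sub>v u)))" using Xc u w Kc by simp
  also have "w \<bullet> (transpose_mat X *\<^sub>v (K *\<^sub>v u)) = (transpose_mat X *\<^sub>v (K *\<^sub>v u)) \<bullet> w"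
    using Xc u w Kc by (intro comm_scalar_prod[of _ "n+2"]) auto
  also have "\<dots> = (K *\<^sub>v u) \<bullet> (X *\<^sub>v w)" using transpose_vec_mult_scalar[OF Xc w, of "K *\<^sub>v u"] u Kv_c by blast
  finally show ?thesis .
qed

end

lemma mtrace_mult: assumes "A \<in> carrier_mat m k" "B \<in> carrier_mat k m"
  shows "mtrace (A * B) = (\<Sum>i<m. \<Sum>j<k. A $$ (i,j) * B $$ (j,i))"
  using assms by (simp add: mtrace_def scalar_prod_def atLeast0LessThan)

lemma mtrace_comm: assumes "A \<in> carrier_mat m k" "B \<in> carrier_mat k m"
  shows "mtrace (A * B) = mtrace (B * A)"
  using assms by (simp add: mtrace_mult[OF assms] mtrace_mult[OF assms(2,1)] sum.swap[of _ "{..<m}"] mult.commute)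

lemma mtrace_add: assumes "A \<in> carrier_mat m m" "B \<in> carrier_mat m m"
  shows "mtrace (A + B) = mtrace A + mtrace B"
  using assms by (simp add: mtrace_def sum.distrib)

lemma mtrace_minus: assumes "A \<in> carrier_mat m m" "B \<in> carrier_mat m m"
  shows "mtrace (A - B) = mtrace A - mtrace B"
  using assms by (simp add: mtrace_def sum_subtractf)

lemma mtrace_uminus: "A \<in> carrier_mat m m \<Longrightarrow> mtrace (- A) = - mtrace A"
  unfolding mtrace_def by (auto simp: sum_negf[symmetric] intro!: sum.cong)

lemma mtrace_smult: "A \<in> carrier_mat m m \<Longrightarrow> mtrace (c \<cdot>\<^sub>m A) = c * mtrace A"
  unfolding mtrace_def by (auto simp: sum_distrib_left intro!: sum.cong)

context KS begin

lemma Ksym: "i < n+2 \<Longrightarrow> j < n+2 \<Longrightarrow> K $$ (i,j) = K $$ (j,i)"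
  by (metis Kc Ks carrier_matD index_transpose_mat(1))

lemma Kv_idx: "x \<in> carrier_vec (n+2) \<Longrightarrow> j < n+2 \<Longrightarrow> (K *\<^sub>v x) $ j = (\<Sum>k<n+2. K $$ (j,k) * x $ k)"
  using Kc by (simp add: scalar_prod_def atLeast0LessThan)

lemma Kv_idx': "x \<in> carrier_vec (n+2) \<Longrightarrow> j < n+2 \<Longrightarrow> (\<Sum>k<n+2. x $ k * K $$ (k,j)) = (K *\<^sub>v x) $ j"
  by (simp add: Kv_idx Ksym mult.commute)

lemma Lop_dims[simp]: "dim_row (Lop K u w) = dim_vec u" "dim_col (Lop K u w) = dim_vec u"
  by (simp_all add: Lop_def)

lemma Lop_c[simp]: "u \<in> carrier_vec (n+2) \<Longrightarrow> Lop K u w \<in> carrier_mat (n+2) (n+2)"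
  by (simp add: Lop_def)

lemma Lop_idx: "u \<in> carrier_vec (n+2) \<Longrightarrow> i < n+2 \<Longrightarrow> j < n+2 \<Longrightarrow>
   Lop K u w $$ (i,j) = u $ i * (K *\<^sub>v w) $ j - w $ i * (K *\<^sub>v u) $ j"
  by (simp add: Lop_def xstar_eq)

lemma Lop_mv: assumes u: "u \<in> carrier_vec (n+2)" and w: "w \<in> carrier_vec (n+2)" and x: "x \<in> carrier_vec (n+2)"
  shows "Lop K u w *\<^sub>v x = ((K *\<^sub>v w) \<bullet> x) \<cdot>\<^sub>v u - ((K *\<^sub>v u) \<bullet> x) \<cdot>\<^sub>v w"
proof (rule eq_vecI)
  fix i assume i: "i < dim_vec (((K *\<^sub>v w) \<bullet> x) \<cdot>\<^sub>v u - ((K *\<^sub>v u) \<bullet> x) \<cdot>\<^sub>v w)"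
  then have i': "i < n+2" using w by simp
  have "(Lop K u w *\<^sub>v x) $ i = (\<Sum>j<n+2. Lop K u w $$ (i,j) * x $ j)"
    using u x i' by (auto simp: scalar_prod_def atLeast0LessThan)
  also have "\<dots> = (\<Sum>j<n+2. u $ i * ((K *\<^sub>v w) $ j * x $ j) - w $ i * ((K *\<^sub>v u) $ j * x $ j))"
    using u i' by (intro sum.cong) (auto simp: Lop_idx algebra_simps)
  also have "\<dots> = u $ i * ((K *\<^sub>v w) \<bullet> x) - w $ i * ((K *\<^sub>v u) \<bullet> x)"
    using x by (simp add: sum_subtractf sum_distrib_left scalar_prod_def atLeast0LessThan)
  finally show "(Lop K u w *\<^sub>v x) $ i = (((K *\<^sub>v w) \<bullet> x) \<cdot>\<^sub>v u - ((K *\<^sub>v u) \<bullet> x) \<cdot>\<^sub>v w) $ i"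
    using i' u w by (simp add: mult.commute)
qed (use u w Lop_c[OF u] in auto)

lemma Lop_oa: assumes u: "u \<in> carrier_vec (n+2)" and w: "w \<in> carrier_vec (n+2)"
  shows "Lop K u w \<in> orth_alg (n+2) K"
proof -
  let ?L = "Lop K u w"
  have "transpose_mat ?L * K + K * ?L = 0\<^sub>m (n+2) (n+2)"
  proof (rule eq_matI)
    fix i j assume ij: "i < dim_row (0\<^sub>m (n+2) (n+2) :: real mat)" "j < dim_col (0\<^sub>m (n+2) (n+2) :: real mat)"
    then have i: "i < n+2" and j: "j < n+2" by auto
    have a: "(transpose_mat ?L * K) $$ (i,j) = (\<Sum>k<n+2. ?L $$ (k,i) * K $$ (k,j))"
      using i j u Kc by (auto simp: scalar_prod_def atLeast0LessThan)
    also have "\<dots> = (\<Sum>k<n+2. (K *\<^sub>v w) $ i * (u $ k * K $$ (k,j)) - (K *\<^sub>v u) $ i * (w $ k * K $$ (k,j)))"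
      using i u by (intro sum.cong) (auto simp: Lop_idx algebra_simps)
    also have "\<dots> = (K *\<^sub>v w) $ i * (K *\<^sub>v u) $ j - (K *\<^sub>v u) $ i * (K *\<^sub>v w) $ j"
      using u w j by (simp add: sum_subtractf flip: sum_distrib_left Kv_idx')
    finally have A: "(transpose_mat ?L * K) $$ (i,j) = (K *\<^sub>v w) $ i * (K *\<^sub>v u) $ j - (K *\<^sub>v u) $ i * (K *\<^sub>v w) $ j" .
    have "(K * ?L) $$ (i,j) = (\<Sum>k<n+2. K $$ (i,k) * ?L $$ (k,j))"
      using i j u Kc by (simp add: scalar_prod_def atLeast0LessThan)
    also have "\<dots> = (\<Sum>k<n+2. (K $$ (i,k) * u $ k) * (K *\<^sub>v w) $ j - (K $$ (i,k) * w $ k) * (K *\<^sub>v u) $ j)"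
      using j u by (intro sum.cong) (auto simp: Lop_idx algebra_simps)
    also have "\<dots> = (K *\<^sub>v u) $ i * (K *\<^sub>v w) $ j - (K *\<^sub>v w) $ i * (K *\<^sub>v u) $ j"
      using u w i by (simp add: sum_subtractf Kv_idx flip: sum_distrib_right)
    finally have B: "(K * ?L) $$ (i,j) = (K *\<^sub>v u) $ i * (K *\<^sub>v w) $ j - (K *\<^sub>v w) $ i * (K *\<^sub>v u) $ j" .
    show "(transpose_mat ?L * K + K * ?L) $$ (i,j) = 0\<^sub>m (n+2) (n+2) $$ (i,j)"
      using A B i j u Kc by simp
  qed (use u Kc in auto)
  then show ?thesis using u by (simp add: orth_alg_def)
qed

lemma mtrace_Lop: assumes M: "M \<in> carrier_mat (n+2) (n+2)" and u: "u \<in> carrier_vec (n+2)" and w: "w \<in> carrier_vec (n+2)"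
  shows "mtrace (M * Lop K u w) = (K *\<^sub>v w) \<bullet> (M *\<^sub>v u) - (K *\<^sub>v u) \<bullet> (M *\<^sub>v w)"
proof -
  have "mtrace (M * Lop K u w) = (\<Sum>i<n+2. \<Sum>j<n+2. M $$ (i,j) * Lop K u w $$ (j,i))"
    by (rule mtrace_mult[OF M Lop_c[OF u]])
  also have "\<dots> = (\<Sum>i<n+2. (K *\<^sub>v w) $ i * (\<Sum>j<n+2. M $$ (i,j) * u $ j) - (K *\<^sub>v u) $ i * (\<Sum>j<n+2. M $$ (i,j) * w $ j))"
    using u by (intro sum.cong refl) (simp add: Lop_idx sum_distrib_left sum_subtractf algebra_simps)
  also have "\<dots> = (K *\<^sub>v w) \<bullet> (M *\<^sub>v u) - (K *\<^sub>v u) \<bullet> (M *\<^sub>v w)"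
    using M u w by (simp add: sum_subtractf scalar_prod_def atLeast0LessThan)
  finally show ?thesis .
qed

end

lemma assoc': "dim_col A = dim_row B \<Longrightarrow> dim_col B = dim_row C \<Longrightarrow> (A * B) * C = A * (B * (C :: 'a :: comm_ring_1 mat))"
  by (rule assoc_mult_mat[of A "dim_row A" "dim_col A" B "dim_col B" C "dim_col C"]) auto

lemma assoc_mv': "dim_col A = dim_row B \<Longrightarrow> dim_col B = dim_vec v \<Longrightarrow> (A * B) *\<^sub>v v = A *\<^sub>v (B *\<^sub>v (v :: 'a :: comm_ring_1 vec))"
  by (rule assoc_mult_mat_vec[of A "dim_row A" "dim_col A" B "dim_col B" v]) auto

definition gv :: "nat \<Rightarrow> real mat \<Rightarrow> real mat \<Rightarrow> real mat" where
  "gv n R X = four_block_mat (0\<^sub>m 1 1) R (0\<^sub>m (n+2) 1) X"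

definition gg :: "nat \<Rightarrow> real mat \<Rightarrow> real mat \<Rightarrow> real mat" where
  "gg n R P = four_block_mat (1\<^sub>m 1) R (0\<^sub>m (n+2) 1) P"

lemma gv_c[simp]: "X \<in> carrier_mat (n+2) (n+2) \<Longrightarrow> gv n R X \<in> carrier_mat (n+3) (n+3)"
  unfolding gv_def using four_block_carrier_mat[of "0\<^sub>m 1 1" 1 1 X "n+2" "n+2"] by (simp add: numeral_3_eq_3)

lemma gg_c[simp]: "X \<in> carrier_mat (n+2) (n+2) \<Longrightarrow> gg n R X \<in> carrier_mat (n+3) (n+3)"
  unfolding gg_def using four_block_carrier_mat[of "1\<^sub>m 1" 1 1 X "n+2" "n+2"] by (simp add: numeral_3_eq_3)

lemma gg_mult: assumes "R \<in> carrier_mat 1 (n+2)" "P \<in> carrier_mat (n+2) (n+2)"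
   "R' \<in> carrier_mat 1 (n+2)" "P' \<in> carrier_mat (n+2) (n+2)"
  shows "gg n R P * gg n R' P' = gg n (R' + R * P') (P * P')"
  unfolding gg_def
  by (subst mult_four_block_mat[of _ 1 1 _ "n+2" _ "n+2" _ _ 1 _ "n+2"])
     (use assms in auto)

lemma gg_gv_mult: assumes "Ri \<in> carrier_mat 1 (n+2)" "Q \<in> carrier_mat (n+2) (n+2)"
   "R \<in> carrier_mat 1 (n+2)" "X \<in> carrier_mat (n+2) (n+2)"
  shows "gg n Ri Q * gv n R X = gv n (R + Ri * X) (Q * X)"
  unfolding gg_def gv_def
  by (subst mult_four_block_mat[of _ 1 1 _ "n+2" _ "n+2" _ _ 1 _ "n+2"])
     (use assms in auto)

lemma gv_gg_mult: assumes "R \<in> carrier_mat 1 (n+2)" "X \<in> carrier_mat (n+2) (n+2)"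
   "Rg \<in> carrier_mat 1 (n+2)" "P \<in> carrier_mat (n+2) (n+2)"
  shows "gv n R X * gg n Rg P = gv n (R * P) (X * P)"
  unfolding gg_def gv_def
  by (subst mult_four_block_mat[of _ 1 1 _ "n+2" _ "n+2" _ _ 1 _ "n+2"])
     (use assms in auto)

lemma gg_one: "gg n (0\<^sub>m 1 (n+2)) (1\<^sub>m (n+2)) = 1\<^sub>m (n+3)"
  unfolding gg_def using four_block_one_mat[of 1 "n+2"] by (simp add: numeral_3_eq_3)

lemma lr_gv: assumes "X \<in> carrier_mat (n+2) (n+2)" shows "lr_block n (gv n R X) = X"
  by (rule eq_matI) (use assms in \<open>auto simp: lr_block_def gv_def\<close>)

lemma top_gv: assumes "R \<in> carrier_mat 1 (n+2)" "X \<in> carrier_mat (n+2) (n+2)"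
  shows "top_row n (gv n R X) = row R 0"
  by (rule eq_vecI) (use assms in \<open>auto simp: top_row_def gv_def\<close>)

lemma mu_gv: assumes "R \<in> carrier_mat 1 (n+2)" "X \<in> carrier_mat (n+2) (n+2)" "y \<in> carrier_vec (n+2)"
  shows "mu n Y y (gv n R X) = 1/2 * mtrace (Y * X) + (R *\<^sub>v y) $ 0"
  using assms by (simp add: mu_def lr_gv top_gv)

lemma mor_mv: "(mat_of_row r *\<^sub>v v) $ 0 = r \<bullet> v"
  by simp

lemma gvee_gv: "gvee_mat n K X x = gv n (mat_of_row (xstar K x)) X"
  by (simp add: gvee_mat_def gv_def)

context KS begin

lemma QTK: assumes P: "P \<in> orth_grp (n+2) K" and Q: "Q \<in> carrier_mat (n+2) (n+2)" and PQ: "P * Q = 1\<^sub>m (n+2)"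
  shows "transpose_mat Q * K = K * P"
proof -
  have Pc: "P \<in> carrier_mat (n+2) (n+2)" and e: "transpose_mat P * K * P = K" using P by (auto simp: orth_grp_def)
  have "transpose_mat Q * K = transpose_mat Q * (transpose_mat P * K * P)" using e by simp
  also have "\<dots> = (transpose_mat Q * transpose_mat P) * K * P"  using Pc Q Kc by (simp add: assoc' carrier_matD)
  also have "transpose_mat Q * transpose_mat P = transpose_mat (P * Q)" using Pc Q by (simp add: transpose_mult)
  also have "\<dots> = 1\<^sub>m (n+2)" using PQ by simp
  finally show ?thesis using Kc Pc by simp
qed

lemma dotQ: assumes P: "P \<in> orth_grp (n+2) K" and Q: "Q \<in> carrier_mat (n+2) (n+2)" and PQ: "P * Q = 1\<^sub>m (n+2)"
  and w: "w \<in> carrier_vec (n+2)" and v: "v \<in> carrier_vec (n+2)"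
  shows "(K *\<^sub>v w) \<bullet> (Q *\<^sub>v v) = (K *\<^sub>v (P *\<^sub>v w)) \<bullet> v"
proof -
  have Pc: "P \<in> carrier_mat (n+2) (n+2)" using P by (auto simp: orth_grp_def)
  have "(K *\<^sub>v w) \<bullet> (Q *\<^sub>v v) = (transpose_mat Q *\<^sub>v (K *\<^sub>v w)) \<bullet> v"
    using transpose_vec_mult_scalar[OF Q v, of "K *\<^sub>v w"] w Kv_c by metis
  also have "transpose_mat Q *\<^sub>v (K *\<^sub>v w) = (transpose_mat Q * K) *\<^sub>v w" using Q Kc w by simp
  also have "\<dots> = K *\<^sub>v (P *\<^sub>v w)" using QTK[OF P Q PQ] Kc Pc w by simp
  finally show ?thesis .
qed

end

context KS begin

lemma core: assumes P: "P \<in> orth_grp (n+2) K" and Q: "Q \<in> carrier_mat (n+2) (n+2)"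
  and PQ: "P * Q = 1\<^sub>m (n+2)"
  and p: "p \<in> carrier_vec (n+2)" and y: "y \<in> carrier_vec (n+2)" and x: "x \<in> carrier_vec (n+2)"
  and Y: "Y \<in> carrier_mat (n+2) (n+2)" and X: "X \<in> orth_alg (n+2) K"
  shows "mu n Y y (gg n (- (mat_of_row (K *\<^sub>v p)) * Q) Q * gv n (mat_of_row (K *\<^sub>v x)) X * gg n (mat_of_row (K *\<^sub>v p)) P)
     = mu n (P * (Y + Lop K p y) * Q) (P *\<^sub>v y) (gv n (mat_of_row (K *\<^sub>v x)) X)"
proof -
  have Pc: "P \<in> carrier_mat (n+2) (n+2)" using P by (simp add: orth_grp_def)
  have Xc: "X \<in> carrier_mat (n+2) (n+2)" using X by (simp add: orth_alg_def)
  define Rp where "Rp = mat_of_row (K *\<^sub>v p)"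
  define Rx where "Rx = mat_of_row (K *\<^sub>v x)"
  define Ri where "Ri = - Rp * Q"
  define M where "M = Q * X * P"
  define L where "L = Lop K p y"
  have Rpc: "Rp \<in> carrier_mat 1 (n+2)" using p by (simp add: Rp_def)
  have Rxc: "Rx \<in> carrier_mat 1 (n+2)" using x by (simp add: Rx_def)
  have Ric: "Ri \<in> carrier_mat 1 (n+2)" using Rpc Q by (simp add: Ri_def)
  have Mc: "M \<in> carrier_mat (n+2) (n+2)" using Q Xc Pc by (simp add: M_def)
  have Lc: "L \<in> carrier_mat (n+2) (n+2)" using p by (simp add: L_def)
  note dims = carrier_matD[OF Pc] carrier_matD[OF Q] carrier_matD[OF Xc] carrier_matD[OF Y] carrier_matD[OF Lc]
  have Py: "P *\<^sub>v y \<in> carrier_vec (n+2)" "P *\<^sub>v p \<in> carrier_vec (n+2)" using Pc y p by auto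
  define a where "a = (K *\<^sub>v (P *\<^sub>v p)) \<bullet> (X *\<^sub>v (P *\<^sub>v y))"
  have RXc: "Rx + Ri * X \<in> carrier_mat 1 (n+2)" using Rxc Ric Xc by simp
  have QXc: "Q * X \<in> carrier_mat (n+2) (n+2)" using Q Xc by simp
  have conj: "gg n Ri Q * gv n Rx X * gg n Rp P = gv n ((Rx + Ri * X) * P) M"
    unfolding gg_gv_mult[OF Ric Q Rxc Xc] gv_gg_mult[OF RXc QXc Rpc Pc] M_def ..
  have "((Rx + Ri * X) * P) *\<^sub>v y = (Rx + Ri * X) *\<^sub>v (P *\<^sub>v y)"
    using RXc Pc y by simp
  also have "\<dots> = Rx *\<^sub>v (P *\<^sub>v y) + (Ri * X) *\<^sub>v (P *\<^sub>v y)"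
    using Rxc Ric Xc Py by (simp add: add_mult_distrib_mat_vec[of _ 1 "n+2"])
  also have "(Ri * X) *\<^sub>v (P *\<^sub>v y) = - (Rp *\<^sub>v (Q *\<^sub>v (X *\<^sub>v (P *\<^sub>v y))))"
  proof -
    have "(Ri * X) *\<^sub>v (P *\<^sub>v y) = - ((Rp * Q * X) *\<^sub>v (P *\<^sub>v y))"
    proof -
      have "dim_vec (P *\<^sub>v y) = n+2" "dim_col X = n+2" using Pc Xc by auto
      then show ?thesis using Rpc Q Xc Py by (simp add: Ri_def carrier_matD assoc')
    qed
    also have "(Rp * Q * X) *\<^sub>v (P *\<^sub>v y) = Rp *\<^sub>v (Q *\<^sub>v (X *\<^sub>v (P *\<^sub>v y)))"
    proof -
      have "dim_vec (P *\<^sub>v y) = n+2" "dim_col X = n+2" using Pc Xc by auto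
      then show ?thesis using Rpc Q Xc Py by (simp add: assoc_mv' carrier_matD)
    qed
    finally show ?thesis .
  qed
  finally have "(((Rx + Ri * X) * P) *\<^sub>v y) $ 0 = (K *\<^sub>v x) \<bullet> (P *\<^sub>v y) - (K *\<^sub>v p) \<bullet> (Q *\<^sub>v (X *\<^sub>v (P *\<^sub>v y)))"
    using Rxc Rpc by (simp add: Rx_def Rp_def)
  also have "(K *\<^sub>v p) \<bullet> (Q *\<^sub>v (X *\<^sub>v (P *\<^sub>v y))) = a"
    unfolding a_def using dotQ[OF P Q PQ p, of "X *\<^sub>v (P *\<^sub>v y)"] Xc Py by simp
  finally have top: "(((Rx + Ri * X) * P) *\<^sub>v y) $ 0 = (K *\<^sub>v x) \<bullet> (P *\<^sub>v y) - a" .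
  have lhs: "mu n Y y (gg n Ri Q * gv n Rx X * gg n Rp P) = 1/2 * mtrace (Y * M) + ((K *\<^sub>v x) \<bullet> (P *\<^sub>v y) - a)"
    unfolding conj using mu_gv[of "(Rx + Ri * X) * P" n M y Y] RXc Pc Mc y top by simp
  have tr1: "mtrace (P * (Y + L) * Q * X) = mtrace ((Y + L) * M)"
  proof -
    have YL: "Y + L \<in> carrier_mat (n+2) (n+2)" using Y Lc by simp
    have "P * (Y + L) * Q * X = P * ((Y + L) * Q * X)" using dims by (simp add: assoc')
    then have "mtrace (P * (Y + L) * Q * X) = mtrace (((Y + L) * Q * X) * P)"
      using mtrace_comm[of P "n+2" "n+2" "(Y + L) * Q * X"] Pc YL Q Xc by simp
    also have "((Y + L) * Q * X) * P = (Y + L) * M" unfolding M_def using dims by (simp add: assoc')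
    finally show ?thesis .
  qed
  have tr2: "mtrace ((Y + L) * M) = mtrace (Y * M) + mtrace (L * M)"
    using Y Lc Mc by (simp add: add_mult_distrib_mat[of _ "n+2" "n+2"] mtrace_add[of _ "n+2"])
  have tr3: "mtrace (L * M) = - 2 * a"
  proof -
    have "mtrace (L * M) = mtrace (M * L)" using mtrace_comm Lc Mc by blast
    also have "\<dots> = (K *\<^sub>v y) \<bullet> (M *\<^sub>v p) - (K *\<^sub>v p) \<bullet> (M *\<^sub>v y)" unfolding L_def by (rule mtrace_Lop[OF Mc p y])
    also have "M *\<^sub>v p = Q *\<^sub>v (X *\<^sub>v (P *\<^sub>v p))" unfolding M_def using dims p y by (simp add: assoc' assoc_mv' carrier_vecD)
    also have "M *\<^sub>v y = Q *\<^sub>v (X *\<^sub>v (P *\<^sub>v y))" unfolding M_def using dims p y by (simp add: assoc' assoc_mv' carrier_vecD)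
    also have "(K *\<^sub>v y) \<bullet> (Q *\<^sub>v (X *\<^sub>v (P *\<^sub>v p))) = (K *\<^sub>v (P *\<^sub>v y)) \<bullet> (X *\<^sub>v (P *\<^sub>v p))"
      using dotQ[OF P Q PQ y, of "X *\<^sub>v (P *\<^sub>v p)"] Xc Py by simp
    also have "\<dots> = - a" unfolding a_def by (rule oa_skew[OF X Py(2) Py(1)])
    also have "(K *\<^sub>v p) \<bullet> (Q *\<^sub>v (X *\<^sub>v (P *\<^sub>v y))) = a"
      unfolding a_def using dotQ[OF P Q PQ p, of "X *\<^sub>v (P *\<^sub>v y)"] Xc Py by simp
    finally show ?thesis by simp
  qed
  have rhs: "mu n (P * (Y + L) * Q) (P *\<^sub>v y) (gv n Rx X) = 1/2 * mtrace (P * (Y + L) * Q * X) + (K *\<^sub>v x) \<bullet> (P *\<^sub>v y)"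
    by (subst mu_gv[OF Rxc Xc Py(1)]) (simp only: Rx_def mor_mv)
  have "mu n Y y (gg n Ri Q * gv n Rx X * gg n Rp P) = mu n (P * (Y + L) * Q) (P *\<^sub>v y) (gv n Rx X)"
    unfolding lhs rhs tr1 tr2 tr3 by simp
  then show ?thesis by (simp only: Ri_def Rp_def Rx_def L_def)
qed

end

context KS begin

lemma oa_iff: "X \<in> orth_alg (n+2) K \<longleftrightarrow> X \<in> carrier_mat (n+2) (n+2) \<and>
   (\<forall>i<n+2. \<forall>j<n+2. (\<Sum>k<n+2. K $$ (i,k) * X $$ (k,j)) = - (\<Sum>k<n+2. K $$ (j,k) * X $$ (k,i)))"
proof (cases "X \<in> carrier_mat (n+2) (n+2)")
  case True
  have e3: "(transpose_mat X * K + K * X) $$ (i,j) = (\<Sum>k<n+2. K $$ (j,k) * X $$ (k,i)) + (\<Sum>k<n+2. K $$ (i,k) * X $$ (k,j))"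
    if "i < n+2" "j < n+2" for i j
  proof -
    have e1: "(transpose_mat X * K) $$ (i,j) = (\<Sum>k<n+2. K $$ (j,k) * X $$ (k,i))"
      using that True Kc by (auto simp: scalar_prod_def atLeast0LessThan Ksym mult.commute intro!: sum.cong)
    have e2: "(K * X) $$ (i,j) = (\<Sum>k<n+2. K $$ (i,k) * X $$ (k,j))"
      using that True Kc by (auto simp: scalar_prod_def atLeast0LessThan)
    have "(transpose_mat X * K + K * X) $$ (i,j) = (transpose_mat X * K) $$ (i,j) + (K * X) $$ (i,j)"
      using that True Kc by simp
    then show ?thesis using e1 e2 by simp
  qed
  have "transpose_mat X * K + K * X = 0\<^sub>m (n+2) (n+2) \<longleftrightarrow>
     (\<forall>i<n+2. \<forall>j<n+2. (transpose_mat X * K + K * X) $$ (i,j) = 0)" (is "?L \<longleftrightarrow> ?R")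
  proof
    assume L: ?L
    show ?R unfolding L by simp
  next
    assume R: ?R
    show ?L by (rule eq_matI) (use R True Kc in auto)
  qed
  also have "\<dots> \<longleftrightarrow> (\<forall>i<n+2. \<forall>j<n+2. (\<Sum>k<n+2. K $$ (i,k) * X $$ (k,j)) = - (\<Sum>k<n+2. K $$ (j,k) * X $$ (k,i)))"
    using e3 by (auto simp: add_eq_0_iff)
  finally show ?thesis using True by (simp add: orth_alg_def)
qed (simp add: orth_alg_def)

lemma oa_c: "X \<in> orth_alg (n+2) K \<Longrightarrow> X \<in> carrier_mat (n+2) (n+2)"
  by (simp add: orth_alg_def)

lemma oa_sums: "A \<in> orth_alg (n+2) K \<Longrightarrow> i < n+2 \<Longrightarrow> j < n+2 \<Longrightarrow>
   (\<Sum>k<n+2. K $$ (i,k) * A $$ (k,j)) = - (\<Sum>k<n+2. K $$ (j,k) * A $$ (k,i))"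
  unfolding oa_iff by blast

lemma oa_add: assumes "A \<in> orth_alg (n+2) K" "B \<in> orth_alg (n+2) K" shows "A + B \<in> orth_alg (n+2) K"
proof -
  have c: "A \<in> carrier_mat (n+2) (n+2)" "B \<in> carrier_mat (n+2) (n+2)" using assms by (auto simp: orth_alg_def)
  have s: "(\<Sum>k<n+2. K $$ (i,k) * (A + B) $$ (k,j)) = (\<Sum>k<n+2. K $$ (i,k) * A $$ (k,j)) + (\<Sum>k<n+2. K $$ (i,k) * B $$ (k,j))"
    if "i < n+2" "j < n+2" for i j
  proof -
    have "(\<Sum>k<n+2. K $$ (i,k) * (A + B) $$ (k,j)) = (\<Sum>k<n+2. K $$ (i,k) * A $$ (k,j) + K $$ (i,k) * B $$ (k,j))"
      by (rule sum.cong) (use that c in \<open>auto simp: distrib_left\<close>)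
    then show ?thesis by (simp add: sum.distrib)
  qed
  show ?thesis unfolding oa_iff
  proof (intro conjI allI impI)
    show "A + B \<in> carrier_mat (n+2) (n+2)" using c by simp
    fix i j assume ij: "i < n+2" "j < n+2"
    show "(\<Sum>k<n+2. K $$ (i,k) * (A + B) $$ (k,j)) = - (\<Sum>k<n+2. K $$ (j,k) * (A + B) $$ (k,i))"
      unfolding s[OF ij] s[OF ij(2,1)] using oa_sums[OF assms(1) ij] oa_sums[OF assms(2) ij] by simp
  qed
qed

lemma oa_smult: assumes "A \<in> orth_alg (n+2) K" shows "c \<cdot>\<^sub>m A \<in> orth_alg (n+2) K"
proof -
  have cA: "A \<in> carrier_mat (n+2) (n+2)" using assms by (auto simp: orth_alg_def)
  have s: "(\<Sum>k<n+2. K $$ (i,k) * (c \<cdot>\<^sub>m A) $$ (k,j)) = c * (\<Sum>k<n+2. K $$ (i,k) * A $$ (k,j))"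
    if "i < n+2" "j < n+2" for i j
  proof -
    have "(\<Sum>k<n+2. K $$ (i,k) * (c \<cdot>\<^sub>m A) $$ (k,j)) = (\<Sum>k<n+2. c * (K $$ (i,k) * A $$ (k,j)))"
      by (rule sum.cong) (use that cA in auto)
    then show ?thesis by (simp add: sum_distrib_left)
  qed
  show ?thesis unfolding oa_iff
  proof (intro conjI allI impI)
    show "c \<cdot>\<^sub>m A \<in> carrier_mat (n+2) (n+2)" using cA by simp
    fix i j assume ij: "i < n+2" "j < n+2"
    show "(\<Sum>k<n+2. K $$ (i,k) * (c \<cdot>\<^sub>m A) $$ (k,j)) = - (\<Sum>k<n+2. K $$ (j,k) * (c \<cdot>\<^sub>m A) $$ (k,i))"
      unfolding s[OF ij] s[OF ij(2,1)] using oa_sums[OF assms(1) ij] by simp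
  qed
qed

lemma oa_minus: assumes "A \<in> orth_alg (n+2) K" "B \<in> orth_alg (n+2) K" shows "A - B \<in> orth_alg (n+2) K"
proof -
  have c: "A \<in> carrier_mat (n+2) (n+2)" "B \<in> carrier_mat (n+2) (n+2)" using assms by (auto simp: orth_alg_def)
  have s: "(\<Sum>k<n+2. K $$ (i,k) * (A - B) $$ (k,j)) = (\<Sum>k<n+2. K $$ (i,k) * A $$ (k,j)) - (\<Sum>k<n+2. K $$ (i,k) * B $$ (k,j))"
    if "i < n+2" "j < n+2" for i j
  proof -
    have "(\<Sum>k<n+2. K $$ (i,k) * (A - B) $$ (k,j)) = (\<Sum>k<n+2. K $$ (i,k) * A $$ (k,j) - K $$ (i,k) * B $$ (k,j))"
      by (rule sum.cong) (use that c in \<open>auto simp: right_diff_distrib\<close>)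
    then show ?thesis by (simp add: sum_subtractf)
  qed
  show ?thesis unfolding oa_iff
  proof (intro conjI allI impI)
    show "A - B \<in> carrier_mat (n+2) (n+2)" using c minus_carrier_mat by blast
    fix i j assume ij: "i < n+2" "j < n+2"
    show "(\<Sum>k<n+2. K $$ (i,k) * (A - B) $$ (k,j)) = - (\<Sum>k<n+2. K $$ (j,k) * (A - B) $$ (k,i))"
      unfolding s[OF ij] s[OF ij(2,1)] using oa_sums[OF assms(1) ij] oa_sums[OF assms(2) ij] by simp
  qed
qed

lemma oa_zero: "0\<^sub>m (n+2) (n+2) \<in> orth_alg (n+2) K"
  unfolding oa_iff by simp

lemma Kv_last_Suc[simp]: "x \<in> carrier_vec (n+2) \<Longrightarrow> (K *\<^sub>v x) $ Suc n = x $ 0"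
  using Kv_last by simp

lemma K_Lop_idx: assumes u: "u \<in> carrier_vec (n+2)" and w: "w \<in> carrier_vec (n+2)" and i: "i < n+2" and j: "j < n+2"
  shows "(K * Lop K u w) $$ (i,j) = (K *\<^sub>v u) $ i * (K *\<^sub>v w) $ j - (K *\<^sub>v w) $ i * (K *\<^sub>v u) $ j"
proof -
  have "(K * Lop K u w) $$ (i,j) = (\<Sum>k<n+2. K $$ (i,k) * Lop K u w $$ (k,j))"
    using i j u Kc by (auto simp: scalar_prod_def atLeast0LessThan)
  also have "\<dots> = (\<Sum>k<n+2. (K $$ (i,k) * u $ k) * (K *\<^sub>v w) $ j - (K $$ (i,k) * w $ k) * (K *\<^sub>v u) $ j)"
    using j u by (intro sum.cong) (auto simp: Lop_idx algebra_simps)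
  also have "\<dots> = (K *\<^sub>v u) $ i * (K *\<^sub>v w) $ j - (K *\<^sub>v w) $ i * (K *\<^sub>v u) $ j"
    using u w i by (simp add: sum_subtractf Kv_idx flip: sum_distrib_right)
  finally show ?thesis .
qed

lemma galg_elim: assumes "Z \<in> galg n K"
  obtains X x where "Z = gv n (mat_of_row (K *\<^sub>v x)) X" "X \<in> orth_alg (n+2) K" "x \<in> carrier_vec (n+2)"
    "X *\<^sub>v elast n = 0\<^sub>v (n+2)" "x $ 0 = 0"
proof -
  obtain X x where "Z = gvee_mat n K X x" "X \<in> orth_alg (n+2) K" "x \<in> carrier_vec (n+2)"
    "X *\<^sub>v elast n = 0\<^sub>v (n+2)" "xstar K x \<bullet> elast n = 0" using assms by (auto simp: galg_def)
  then show ?thesis using that[of x X] by (simp add: gvee_gv xstar_eq dot_elast Kv_last)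
qed

lemma galg_intro: assumes "X \<in> orth_alg (n+2) K" "x \<in> carrier_vec (n+2)" "X *\<^sub>v elast n = 0\<^sub>v (n+2)" "x $ 0 = 0"
  shows "gv n (mat_of_row (K *\<^sub>v x)) X \<in> galg n K"
  unfolding galg_def
  by (rule CollectI, rule exI[of _ X], rule exI[of _ x]) (use assms in \<open>simp add: gvee_gv xstar_eq dot_elast Kv_last\<close>)

lemma galg_c: "Z \<in> galg n K \<Longrightarrow> Z \<in> carrier_mat (n+3) (n+3)"
  by (erule galg_elim) (simp add: oa_c)

lemma mu_galg: assumes "Z = gv n (mat_of_row (K *\<^sub>v x)) X" "X \<in> orth_alg (n+2) K" "x \<in> carrier_vec (n+2)"
  "y \<in> carrier_vec (n+2)"
  shows "mu n Y y Z = 1/2 * mtrace (Y * X) + (K *\<^sub>v x) \<bullet> y"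
  using assms mu_gv[of "mat_of_row (K *\<^sub>v x)" n X y Y] by (simp add: oa_c)

lemma mu_annY: assumes Z: "Z \<in> galg n K" and A: "A \<in> carrier_mat (n+2) (n+2)" and u: "u \<in> carrier_vec (n+2)"
  and a: "a \<in> carrier_vec (n+2)"
  shows "mu n (A + Lop K u (elast n)) a Z = mu n A a Z"
proof -
  obtain X x where Zx: "Z = gv n (mat_of_row (K *\<^sub>v x)) X" "X \<in> orth_alg (n+2) K" "x \<in> carrier_vec (n+2)"
    "X *\<^sub>v elast n = 0\<^sub>v (n+2)" "x $ 0 = 0" using galg_elim[OF Z] by blast
  have Xc: "X \<in> carrier_mat (n+2) (n+2)" using Zx oa_c by auto
  have "mtrace ((A + Lop K u (elast n)) * X) = mtrace (A * X) + mtrace (Lop K u (elast n) * X)"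
    using A u Xc mtrace_add[OF mult_carrier_mat[OF A Xc] mult_carrier_mat[OF Lop_c[OF u] Xc]]
    by (simp add: add_mult_distrib_mat[of _ "n+2" "n+2"])
  also have "mtrace (Lop K u (elast n) * X) = mtrace (X * Lop K u (elast n))"
    using mtrace_comm[of "Lop K u (elast n)" "n+2" "n+2" X] u Xc by simp
  also have "\<dots> = (K *\<^sub>v elast n) \<bullet> (X *\<^sub>v u) - (K *\<^sub>v u) \<bullet> (X *\<^sub>v elast n)"
    by (rule mtrace_Lop[OF Xc u elast_c])
  also have "(K *\<^sub>v elast n) \<bullet> (X *\<^sub>v u) = - ((K *\<^sub>v u) \<bullet> (X *\<^sub>v elast n))"
    by (rule oa_skew[OF Zx(2) u elast_c])
  finally have "mtrace ((A + Lop K u (elast n)) * X) = mtrace (A * X)" using Zx(4) u by simp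
  then show ?thesis using mu_galg[OF Zx(1-3) a] by simp
qed

lemma mu_anny: assumes Z: "Z \<in> galg n K" and a: "a \<in> carrier_vec (n+2)"
  shows "mu n A (a + c \<cdot>\<^sub>v elast n) Z = mu n A a Z"
proof -
  obtain X x where Zx: "Z = gv n (mat_of_row (K *\<^sub>v x)) X" "X \<in> orth_alg (n+2) K" "x \<in> carrier_vec (n+2)"
    "X *\<^sub>v elast n = 0\<^sub>v (n+2)" "x $ 0 = 0" using galg_elim[OF Z] by blast
  have "(K *\<^sub>v x) \<bullet> (a + c \<cdot>\<^sub>v elast n) = (K *\<^sub>v x) \<bullet> a + c * ((K *\<^sub>v x) \<bullet> elast n)"
    using Zx(3) a scalar_prod_smult_distrib[of "K *\<^sub>v x" "n+2" "elast n" c] by (simp add: scalar_prod_add_distrib[of _ "n+2"])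
  also have "(K *\<^sub>v x) \<bullet> elast n = 0" using Zx(3,5) by (simp add: dot_elast Kv_last)
  finally show ?thesis using mu_galg[OF Zx(1-3)] a by simp
qed

lemma mu_diff: assumes Z: "Z \<in> galg n K" and A: "A \<in> carrier_mat (n+2) (n+2)" "B \<in> carrier_mat (n+2) (n+2)"
  and a: "a \<in> carrier_vec (n+2)" "b \<in> carrier_vec (n+2)"
  shows "mu n (A - B) (a - b) Z = mu n A a Z - mu n B b Z"
proof -
  obtain X x where Zx: "Z = gv n (mat_of_row (K *\<^sub>v x)) X" "X \<in> orth_alg (n+2) K" "x \<in> carrier_vec (n+2)"
    "X *\<^sub>v elast n = 0\<^sub>v (n+2)" "x $ 0 = 0" using galg_elim[OF Z] by blast
  have Xc: "X \<in> carrier_mat (n+2) (n+2)" using Zx oa_c by auto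
  have "(A - B) * X = A * X - B * X" by (rule minus_mult_distrib_mat[OF A Xc])
  then have t: "mtrace ((A - B) * X) = mtrace (A * X) - mtrace (B * X)"
    using mtrace_minus[OF mult_carrier_mat[OF A(1) Xc] mult_carrier_mat[OF A(2) Xc]] by simp
  have d: "(K *\<^sub>v x) \<bullet> (a - b) = (K *\<^sub>v x) \<bullet> a - (K *\<^sub>v x) \<bullet> b"
    by (rule scalar_prod_minus_distrib[OF Kv_c[OF Zx(3)] a])
  have ab: "a - b \<in> carrier_vec (n+2)" using a by simp
  have "mu n (A - B) (a - b) Z = 1/2 * mtrace ((A - B) * X) + (K *\<^sub>v x) \<bullet> (a - b)"
    by (rule mu_galg[OF Zx(1-3) ab])
  also have "\<dots> = (1/2 * mtrace (A * X) + (K *\<^sub>v x) \<bullet> a) - (1/2 * mtrace (B * X) + (K *\<^sub>v x) \<bullet> b)"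
    unfolding t d by (simp add: algebra_simps)
  also have "\<dots> = mu n A a Z - mu n B b Z"
    using mu_galg[OF Zx(1-3) a(1), of A] mu_galg[OF Zx(1-3) a(2), of B] by simp
  finally show ?thesis .
qed

end

context KS begin

lemma K0: assumes "v \<in> carrier_vec (n+2)" shows "(K *\<^sub>v v) $ 0 = v $ (n+1)"
  using Kv_last[of "K *\<^sub>v v"] KKv[OF assms] assms by simp

lemma PTK: assumes P: "P \<in> orth_grp (n+2) K" and Q: "Q \<in> carrier_mat (n+2) (n+2)" and PQ: "P * Q = 1\<^sub>m (n+2)"
  shows "transpose_mat P * K = K * Q"
proof -
  have Pc: "P \<in> carrier_mat (n+2) (n+2)" and e: "transpose_mat P * K * P = K" using P by (auto simp: orth_grp_def)
  note dims = carrier_matD[OF Pc] carrier_matD[OF Q] carrier_matD[OF Kc]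
  have "transpose_mat P * K = transpose_mat P * K * (P * Q)" using PQ dims by simp
  also have "\<dots> = (transpose_mat P * K * P) * Q" using dims by (simp add: assoc')
  finally show ?thesis using e by simp
qed

lemma conj_oa: assumes P: "P \<in> orth_grp (n+2) K" and Q: "Q \<in> carrier_mat (n+2) (n+2)" and PQ: "P * Q = 1\<^sub>m (n+2)"
  and Z: "Z \<in> orth_alg (n+2) K"
  shows "P * Z * Q \<in> orth_alg (n+2) K"
proof -
  have Pc: "P \<in> carrier_mat (n+2) (n+2)" using P by (auto simp: orth_grp_def)
  have Zc: "Z \<in> carrier_mat (n+2) (n+2)" using Z by (rule oa_c)
  note dims = carrier_matD[OF Pc] carrier_matD[OF Q] carrier_matD[OF Kc] carrier_matD[OF Zc]
  have "transpose_mat (P * Z * Q) = transpose_mat Q * transpose_mat (P * Z)"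
    by (rule transpose_mult[OF mult_carrier_mat[OF Pc Zc] Q])
  also have "transpose_mat (P * Z) = transpose_mat Z * transpose_mat P" by (rule transpose_mult[OF Pc Zc])
  finally have "transpose_mat (P * Z * Q) * K = transpose_mat Q * (transpose_mat Z * (transpose_mat P * K))"
    using dims by (simp add: assoc')
  also have "\<dots> = transpose_mat Q * ((transpose_mat Z * K) * Q)"
    using dims PTK[OF P Q PQ] by (simp add: assoc')
  also have "transpose_mat Z * K = - (K * Z)" using oa_KX[OF Z] by simp
  also have "transpose_mat Q * (- (K * Z) * Q) = - ((transpose_mat Q * K) * Z * Q)"
    using dims by (simp add: assoc')
  also have "\<dots> = - (K * (P * Z * Q))" using QTK[OF P Q PQ] dims by (simp add: assoc')
  finally have e: "transpose_mat (P * Z * Q) * K = - (K * (P * Z * Q))" .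
  have c: "P * Z * Q \<in> carrier_mat (n+2) (n+2)" using mult_carrier_mat[OF mult_carrier_mat[OF Pc Zc] Q] .
  have "transpose_mat (P * Z * Q) * K + K * (P * Z * Q) = 0\<^sub>m (n+2) (n+2)"
    unfolding e by (rule eq_matI) (use dims in auto)
  then show ?thesis using c by (simp add: orth_alg_def)
qed

lemma ginv: assumes Pc: "P \<in> carrier_mat (n+2) (n+2)" and Q: "Q \<in> carrier_mat (n+2) (n+2)"
  and PQ: "P * Q = 1\<^sub>m (n+2)" and QP: "Q * P = 1\<^sub>m (n+2)" and p: "p \<in> carrier_vec (n+2)"
  shows "gg n (mat_of_row (K *\<^sub>v p)) P * gg n (- mat_of_row (K *\<^sub>v p) * Q) Q = 1\<^sub>m (n+3)"
    "gg n (- mat_of_row (K *\<^sub>v p) * Q) Q * gg n (mat_of_row (K *\<^sub>v p)) P = 1\<^sub>m (n+3)"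
proof -
  define Rp where "Rp = mat_of_row (K *\<^sub>v p)"
  have Rpc: "Rp \<in> carrier_mat 1 (n+2)" using p by (simp add: Rp_def)
  note dims = carrier_matD[OF Pc] carrier_matD[OF Q] carrier_matD[OF Rpc]
  have Ric: "- Rp * Q \<in> carrier_mat 1 (n+2)" using Rpc Q by simp
  have z1: "- Rp * Q + Rp * Q = 0\<^sub>m 1 (n+2)" by (rule eq_matI) (use dims in auto)
  have "(- Rp * Q) * P = - (Rp * (Q * P))" using dims by (simp add: assoc')
  also have "\<dots> = - Rp" using QP dims by simp
  finally have z2: "Rp + (- Rp * Q) * P = 0\<^sub>m 1 (n+2)" by (intro eq_matI) (use dims in auto)
  show "gg n (mat_of_row (K *\<^sub>v p)) P * gg n (- mat_of_row (K *\<^sub>v p) * Q) Q = 1\<^sub>m (n+3)"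
    unfolding Rp_def[symmetric] using gg_mult[OF Rpc Pc Ric Q] z1 PQ gg_one by simp
  show "gg n (- mat_of_row (K *\<^sub>v p) * Q) Q * gg n (mat_of_row (K *\<^sub>v p)) P = 1\<^sub>m (n+3)"
    unfolding Rp_def[symmetric] using gg_mult[OF Ric Q Rpc Pc] z2 QP gg_one by simp
qed

end

context KS begin

lemma mtrace_zero_right: "W \<in> carrier_mat m m \<Longrightarrow> mtrace (W * 0\<^sub>m m m) = 0"
  by (simp add: mtrace_def)

lemma ann_y: assumes w: "w \<in> carrier_vec (n+2)" and H: "\<forall>Z\<in>galg n K. mu n W w Z = 0"
  and W: "W \<in> carrier_mat (n+2) (n+2)"
  shows "w = w $ (n+1) \<cdot>\<^sub>v elast n"
proof -
  have wj: "w $ j = 0" if j: "j < n+1" for j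
  proof -
    define ej where "ej = (unit_vec (n+2) j :: real vec)"
    have ejc: "ej \<in> carrier_vec (n+2)" by (simp add: ej_def)
    have x: "K *\<^sub>v ej \<in> carrier_vec (n+2)" using ejc by simp
    have x0: "(K *\<^sub>v ej) $ 0 = 0" using K0[OF ejc] j by (simp add: ej_def)
    have Zin: "gv n (mat_of_row (K *\<^sub>v (K *\<^sub>v ej))) (0\<^sub>m (n+2) (n+2)) \<in> galg n K"
      by (rule galg_intro[OF oa_zero x]) (use x0 in auto)
    have "mu n W w (gv n (mat_of_row (K *\<^sub>v (K *\<^sub>v ej))) (0\<^sub>m (n+2) (n+2))) = 1/2 * mtrace (W * 0\<^sub>m (n+2) (n+2)) + (K *\<^sub>v (K *\<^sub>v ej)) \<bullet> w"
      by (rule mu_galg[OF refl oa_zero x w])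
    also have "\<dots> = ej \<bullet> w" using mtrace_zero_right[OF W] KKv[OF ejc] by simp
    also have "\<dots> = w $ j" unfolding ej_def using w j by simp
    finally show ?thesis using H Zin by simp
  qed
  show ?thesis
  proof (rule eq_vecI)
    fix i assume "i < dim_vec (w $ (n+1) \<cdot>\<^sub>v elast n)"
    then have i: "i < n+2" by (simp add: elast_def)
    show "w $ i = (w $ (n+1) \<cdot>\<^sub>v elast n) $ i"
    proof (cases "i = n+1")
      case True then show ?thesis by (simp add: elast_def)
    next
      case False then have "i < n+1" using i by simp
      then show ?thesis using wj[of i] i False by (simp add: elast_def)
    qed
  qed (use w in \<open>simp add: elast_def\<close>)
qed

lemma ann_W: assumes W: "W \<in> orth_alg (n+2) K" and w: "w \<in> carrier_vec (n+2)" and H: "\<forall>Z\<in>galg n K. mu n W w Z = 0"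
  shows "W = Lop K (W *\<^sub>v unit_vec (n+2) 0) (elast n)"
proof -
  have Wc: "W \<in> carrier_mat (n+2) (n+2)" using W by (rule oa_c)
  define A where "A = K * W"
  have Ac: "A \<in> carrier_mat (n+2) (n+2)" using Wc Kc by (simp add: A_def)
  have Aidx: "A $$ (i,j) = (\<Sum>k<n+2. K $$ (i,k) * W $$ (k,j))" if "i < n+2" "j < n+2" for i j
    using that Kc Wc by (auto simp: A_def scalar_prod_def atLeast0LessThan)
  have anti: "A $$ (i,j) = - A $$ (j,i)" if "i < n+2" "j < n+2" for i j
    using oa_sums[OF W that] Aidx[OF that] Aidx[OF that(2,1)] by simp
  have zero: "A $$ (b,a) = 0" if a: "1 \<le> a" "a < n+2" and b: "1 \<le> b" "b < n+2" for a b
  proof -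
    define ea where "ea = (unit_vec (n+2) a :: real vec)"
    define eb where "eb = (unit_vec (n+2) b :: real vec)"
    have eac: "ea \<in> carrier_vec (n+2)" and ebc: "eb \<in> carrier_vec (n+2)" by (auto simp: ea_def eb_def)
    have L: "Lop K ea eb \<in> orth_alg (n+2) K" by (rule Lop_oa[OF eac ebc])
    have eb0: "eb $ 0 = 0" using b by (simp add: eb_def)
    have ea0: "ea $ 0 = 0" using a by (simp add: ea_def)
    have "(K *\<^sub>v eb) \<bullet> elast n = 0" using dot_elast[OF Kv_c[OF ebc]] Kv_last[OF ebc] eb0 by simp
    moreover have "(K *\<^sub>v ea) \<bullet> elast n = 0" using dot_elast[OF Kv_c[OF eac]] Kv_last[OF eac] ea0 by simp
    ultimately have Le: "Lop K ea eb *\<^sub>v elast n = 0\<^sub>v (n+2)"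
      using Lop_mv[OF eac ebc elast_c] eac ebc by (auto intro!: eq_vecI)
    have z: "(0\<^sub>v (n+2) :: real vec) \<in> carrier_vec (n+2)" by simp
    have Zin: "gv n (mat_of_row (K *\<^sub>v 0\<^sub>v (n+2))) (Lop K ea eb) \<in> galg n K"
      by (rule galg_intro[OF L z Le]) simp
    have "mu n W w (gv n (mat_of_row (K *\<^sub>v 0\<^sub>v (n+2))) (Lop K ea eb)) = 1/2 * mtrace (W * Lop K ea eb) + (K *\<^sub>v 0\<^sub>v (n+2)) \<bullet> w"
      by (rule mu_galg[OF refl L z w])
    also have "(K *\<^sub>v 0\<^sub>v (n+2)) \<bullet> w = 0"
    proof -
      have "K *\<^sub>v 0\<^sub>v (n+2) = 0\<^sub>v (n+2)" by (rule eq_vecI) (use Kc in auto)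
      then show ?thesis using w by simp
    qed
    also have "mtrace (W * Lop K ea eb) = (K *\<^sub>v eb) \<bullet> (W *\<^sub>v ea) - (K *\<^sub>v ea) \<bullet> (W *\<^sub>v eb)"
      by (rule mtrace_Lop[OF Wc eac ebc])
    also have "(K *\<^sub>v ea) \<bullet> (W *\<^sub>v eb) = - ((K *\<^sub>v eb) \<bullet> (W *\<^sub>v ea))"
      by (rule oa_skew[OF W ebc eac])
    finally have "(K *\<^sub>v eb) \<bullet> (W *\<^sub>v ea) = 0" using H Zin by simp
    moreover have "(K *\<^sub>v eb) \<bullet> (W *\<^sub>v ea) = A $$ (b,a)"
    proof -
      have "(K *\<^sub>v eb) \<bullet> (W *\<^sub>v ea) = eb \<bullet> (K *\<^sub>v (W *\<^sub>v ea))" using dot_sym ebc eac Wc by simp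
      also have "K *\<^sub>v (W *\<^sub>v ea) = A *\<^sub>v ea" unfolding A_def using Kc Wc eac by simp
      also have "eb \<bullet> (A *\<^sub>v ea) = A $$ (b,a)" using Ac a b by (simp add: ea_def eb_def)
      finally show ?thesis .
    qed
    ultimately show ?thesis by simp
  qed
  define u where "u = W *\<^sub>v unit_vec (n+2) 0"
  have uc: "u \<in> carrier_vec (n+2)" using Wc by (simp add: u_def)
  have Ku: "(K *\<^sub>v u) $ i = A $$ (i,0)" if "i < n+2" for i
  proof -
    have "K *\<^sub>v u = A *\<^sub>v unit_vec (n+2) 0" unfolding u_def A_def using Kc Wc by simp
    then show ?thesis using Ac that by simp
  qed
  have Ke: "(K *\<^sub>v elast n) $ j = (if j = 0 then 1 else 0)" if "j < n+2" for j
    using that by (simp add: K_elast)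
  have KWL: "K * W = K * Lop K u (elast n)"
  proof (rule eq_matI)
    fix i j assume ij: "i < dim_row (K * Lop K u (elast n))" "j < dim_col (K * Lop K u (elast n))"
    then have i: "i < n+2" and j: "j < n+2" using Kc uc by auto
    have "(K * Lop K u (elast n)) $$ (i,j) = A $$ (i,0) * (if j = 0 then 1 else 0) - (if i = 0 then 1 else 0) * A $$ (j,0)"
      using K_Lop_idx[OF uc elast_c i j] Ku[OF i] Ku[OF j] Ke[OF i] Ke[OF j] by simp
    also have "\<dots> = A $$ (i,j)"
    proof (cases "i = 0")
      case True
      then show ?thesis using anti[OF i j] anti[of 0 0] by auto
    next
      case False
      then show ?thesis using zero[of j i] i j by (cases "j = 0") auto
    qed
    finally show "(K * W) $$ (i, j) = (K * Lop K u (elast n)) $$ (i, j)" by (simp add: A_def)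
  qed (use Kc Wc uc in auto)
  have "W = K * (K * W)" using Kc Wc KK by (simp flip: assoc_mult_mat[of K "n+2" "n+2" K "n+2" W "n+2"])
  also have "\<dots> = K * (K * Lop K u (elast n))" using KWL by simp
  also have "\<dots> = Lop K u (elast n)" using Kc uc KK by (simp flip: assoc_mult_mat[of K "n+2" "n+2" K "n+2" _ "n+2"])
  finally show ?thesis unfolding u_def .
qed

end

context KS begin

lemma gg_in: assumes "P \<in> orth_grp (n+2) K" "P *\<^sub>v elast n = elast n" "p \<in> carrier_vec (n+2)" "p $ 0 = 0"
  shows "gg n (mat_of_row (K *\<^sub>v p)) P \<in> ggrp n K"
  unfolding ggrp_def gg_def
  by (rule CollectI, rule exI[of _ P], rule exI[of _ p]) (use assms in \<open>simp add: xstar_eq dot_elast\<close>)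

lemma fwd: assumes Y: "Y \<in> orth_alg (n+2) K" and y: "y \<in> carrier_vec (n+2)"
  and Y': "Y' \<in> orth_alg (n+2) K" and y': "y' \<in> carrier_vec (n+2)"
  and E: "special_equiv n K Y y Y' y'"
  shows "same_coadj_orbit n K (mu n Y y) (mu n Y' y')"
proof -
  obtain P Pinv v p v0 where P: "P \<in> orth_grp (n+2) K" and Pe: "P *\<^sub>v elast n = elast n"
    and Pinv: "Pinv \<in> carrier_mat (n+2) (n+2)" and PQ: "P * Pinv = 1\<^sub>m (n+2)" and QP: "Pinv * P = 1\<^sub>m (n+2)"
    and v: "v \<in> carrier_vec (n+2)" and p: "p \<in> carrier_vec (n+2)" and p0: "xstar K p \<bullet> elast n = 0"
    and eqY: "Y' + Lop K v (elast n) = P * (Y + Lop K p y) * Pinv"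
    and eqy: "y' = P *\<^sub>v y + v0 \<cdot>\<^sub>v elast n"
    using E unfolding special_equiv_def by blast
  have Pc: "P \<in> carrier_mat (n+2) (n+2)" using P by (simp add: orth_grp_def)
  have p0': "p $ 0 = 0" using p0 p by (simp add: xstar_eq dot_elast)
  have Yc: "Y \<in> carrier_mat (n+2) (n+2)" using Y by (rule oa_c)
  have Y'c: "Y' \<in> carrier_mat (n+2) (n+2)" using Y' by (rule oa_c)
  have Py: "P *\<^sub>v y \<in> carrier_vec (n+2)" using Pc y by simp
  define g where "g = gg n (mat_of_row (K *\<^sub>v p)) P"
  define gi where "gi = gg n (- mat_of_row (K *\<^sub>v p) * Pinv) Pinv"
  have gin: "g \<in> ggrp n K" unfolding g_def by (rule gg_in[OF P Pe p p0'])
  have gic: "gi \<in> carrier_mat (n+3) (n+3)" unfolding gi_def using Pinv by simp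
  have inv: "g * gi = 1\<^sub>m (n+3)" "gi * g = 1\<^sub>m (n+3)" unfolding g_def gi_def using ginv[OF Pc Pinv PQ QP p] by auto
  have "\<forall>Z\<in>galg n K. mu n Y' y' Z = mu n Y y (gi * Z * g)"
  proof
    fix Z assume Z: "Z \<in> galg n K"
    obtain X x where Zx: "Z = gv n (mat_of_row (K *\<^sub>v x)) X" "X \<in> orth_alg (n+2) K" "x \<in> carrier_vec (n+2)"
      "X *\<^sub>v elast n = 0\<^sub>v (n+2)" "x $ 0 = 0" using galg_elim[OF Z] by blast
    have "mu n Y y (gi * Z * g) = mu n (P * (Y + Lop K p y) * Pinv) (P *\<^sub>v y) Z"
      unfolding gi_def g_def Zx(1) by (rule core[OF P Pinv PQ p y Zx(3) Yc Zx(2)])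
    also have "\<dots> = mu n (Y' + Lop K v (elast n)) (P *\<^sub>v y) Z" using eqY by simp
    also have "\<dots> = mu n Y' (P *\<^sub>v y) Z" by (rule mu_annY[OF Z Y'c v Py])
    also have "\<dots> = mu n Y' y' Z" unfolding eqy by (rule mu_anny[OF Z Py, symmetric])
    finally show "mu n Y' y' Z = mu n Y y (gi * Z * g)" by simp
  qed
  then show ?thesis unfolding same_coadj_orbit_def using gin gic inv by blast
qed

lemma bwd: assumes Y: "Y \<in> orth_alg (n+2) K" and y: "y \<in> carrier_vec (n+2)"
  and Y': "Y' \<in> orth_alg (n+2) K" and y': "y' \<in> carrier_vec (n+2)"
  and O: "same_coadj_orbit n K (mu n Y y) (mu n Y' y')"
  shows "special_equiv n K Y y Y' y'"
proof -
  obtain g ginv where gin: "g \<in> ggrp n K" and gic: "ginv \<in> carrier_mat (n+3) (n+3)"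
    and inv: "g * ginv = 1\<^sub>m (n+3)" "ginv * g = 1\<^sub>m (n+3)"
    and H0: "\<forall>Z\<in>galg n K. mu n Y' y' Z = mu n Y y (ginv * Z * g)"
    using O unfolding same_coadj_orbit_def by blast
  obtain P p where gP: "g = gg n (mat_of_row (K *\<^sub>v p)) P" and P: "P \<in> orth_grp (n+2) K"
    and Pe: "P *\<^sub>v elast n = elast n" and p: "p \<in> carrier_vec (n+2)" and p0: "xstar K p \<bullet> elast n = 0"
    using gin unfolding ggrp_def gg_def by (auto simp: xstar_eq)
  have Pc: "P \<in> carrier_mat (n+2) (n+2)" and PKP: "transpose_mat P * K * P = K" using P by (auto simp: orth_grp_def)
  define Q where "Q = K * transpose_mat P * K"
  have Qc: "Q \<in> carrier_mat (n+2) (n+2)" using Kc Pc by (simp add: Q_def)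
  note dims = carrier_matD[OF Pc] carrier_matD[OF Kc]
  have "Q * P = K * (transpose_mat P * K * P)" unfolding Q_def using dims by (simp add: assoc')
  then have QP: "Q * P = 1\<^sub>m (n+2)" using PKP KK by simp
  have PQ: "P * Q = 1\<^sub>m (n+2)" by (rule mat_mult_left_right_inverse[OF Qc Pc QP])
  define gi where "gi = gg n (- mat_of_row (K *\<^sub>v p) * Q) Q"
  have gic': "gi \<in> carrier_mat (n+3) (n+3)" unfolding gi_def using Qc by simp
  have gc: "g \<in> carrier_mat (n+3) (n+3)" unfolding gP using Pc by simp
  have inv': "g * gi = 1\<^sub>m (n+3)" unfolding gP gi_def using ginv[OF Pc Qc PQ QP p] by auto
  have "ginv = ginv * (g * gi)" using inv' gic by simp
  also have "\<dots> = (ginv * g) * gi" using gic gc gic' by simp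
  also have "\<dots> = gi" using inv(2) gic' by simp
  finally have gieq: "ginv = gi" .
  have Yc: "Y \<in> carrier_mat (n+2) (n+2)" using Y by (rule oa_c)
  have Y'c: "Y' \<in> carrier_mat (n+2) (n+2)" using Y' by (rule oa_c)
  have Py: "P *\<^sub>v y \<in> carrier_vec (n+2)" using Pc y by simp
  define M where "M = P * (Y + Lop K p y) * Q"
  have Mo: "M \<in> orth_alg (n+2) K" unfolding M_def
    by (rule conj_oa[OF P Qc PQ oa_add[OF Y Lop_oa[OF p y]]])
  have Mc: "M \<in> carrier_mat (n+2) (n+2)" using Mo by (rule oa_c)
  define W where "W = Y' - M"
  define w where "w = y' - P *\<^sub>v y"
  have Wo: "W \<in> orth_alg (n+2) K" unfolding W_def by (rule oa_minus[OF Y' Mo])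
  have Wc: "W \<in> carrier_mat (n+2) (n+2)" using Wo by (rule oa_c)
  have wc: "w \<in> carrier_vec (n+2)" unfolding w_def using y' Py by simp
  have H: "\<forall>Z\<in>galg n K. mu n W w Z = 0"
  proof
    fix Z assume Z: "Z \<in> galg n K"
    obtain X x where Zx: "Z = gv n (mat_of_row (K *\<^sub>v x)) X" "X \<in> orth_alg (n+2) K" "x \<in> carrier_vec (n+2)"
      "X *\<^sub>v elast n = 0\<^sub>v (n+2)" "x $ 0 = 0" using galg_elim[OF Z] by blast
    have "mu n Y' y' Z = mu n Y y (gi * Z * g)" using H0 Z gieq by simp
    also have "\<dots> = mu n M (P *\<^sub>v y) Z"
      unfolding gi_def gP Zx(1) M_def by (rule core[OF P Qc PQ p y Zx(3) Yc Zx(2)])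
    finally have e: "mu n Y' y' Z = mu n M (P *\<^sub>v y) Z" .
    show "mu n W w Z = 0" unfolding W_def w_def using mu_diff[OF Z Y'c Mc y' Py] e by simp
  qed
  define u where "u = W *\<^sub>v unit_vec (n+2) 0"
  have uc: "u \<in> carrier_vec (n+2)" using Wc by (simp add: u_def)
  have WL: "W = Lop K u (elast n)" unfolding u_def by (rule ann_W[OF Wo wc H])
  have wy: "w = w $ (n+1) \<cdot>\<^sub>v elast n" by (rule ann_y[OF wc H Wc])
  have Kmu: "(K *\<^sub>v (- u)) $ j = - ((K *\<^sub>v u) $ j)" if "j < n+2" for j
    using that uc Kc by (simp add: Kv_idx sum_negf[symmetric])
  have eqY: "Y' + Lop K (- u) (elast n) = M"
  proof (rule eq_matI)
    fix i j assume ij: "i < dim_row M" "j < dim_col M"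
    then have i: "i < n+2" and j: "j < n+2" using Mc by auto
    have "W $$ (i,j) = Y' $$ (i,j) - M $$ (i,j)" unfolding W_def using i j Y'c Mc by simp
    moreover have "W $$ (i,j) = u $ i * (K *\<^sub>v elast n) $ j - elast n $ i * (K *\<^sub>v u) $ j"
      unfolding WL using Lop_idx[OF uc i j] .
    moreover have "Lop K (- u) (elast n) $$ (i,j) = - u $ i * (K *\<^sub>v elast n) $ j - elast n $ i * (K *\<^sub>v (- u)) $ j"
      using Lop_idx[of "- u" i j "elast n"] uc i j by simp
    ultimately show "(Y' + Lop K (- u) (elast n)) $$ (i, j) = M $$ (i, j)"
      using i j Y'c uc Kmu[OF j] by simp
  qed (use Y'c Mc uc in auto)
  have eqy: "y' = P *\<^sub>v y + w $ (n+1) \<cdot>\<^sub>v elast n"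
  proof (rule eq_vecI)
    fix i assume "i < dim_vec (P *\<^sub>v y + w $ (n+1) \<cdot>\<^sub>v elast n)"
    then have i: "i < n+2" using Pc by (simp add: elast_def)
    have "w $ i = y' $ i - (P *\<^sub>v y) $ i" unfolding w_def using i y' Py Pc by (simp add: carrier_vecD)
    moreover have "w $ i = (w $ (n+1) \<cdot>\<^sub>v elast n) $ i" using wy by simp
    ultimately show "y' $ i = (P *\<^sub>v y + w $ (n+1) \<cdot>\<^sub>v elast n) $ i" using i by (simp add: elast_def)
  qed (use y' Pc in \<open>auto simp: elast_def\<close>)
  show ?thesis unfolding special_equiv_def
    using P Pe Qc PQ QP uc p p0 eqY eqy unfolding M_def by (intro exI[of _ P] exI[of _ Q] exI[of _ "- u"] exI[of _ p] exI[of _ "w $ (n+1)"]) auto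
qed

end

definition msum :: "nat \<Rightarrow> 'i set \<Rightarrow> ('i \<Rightarrow> real) \<Rightarrow> ('i \<Rightarrow> real mat) \<Rightarrow> real mat" where
  "msum m A c F = mat m m (\<lambda>(i,j). \<Sum>k\<in>A. c k * F k $$ (i,j))"

context KS begin

lemma galg_iff: "Z \<in> galg n K \<longleftrightarrow> Z \<in> carrier_mat (n+3) (n+3) \<and> (\<forall>i<n+3. Z $$ (i,0) = 0)
   \<and> lr_block n Z \<in> orth_alg (n+2) K \<and> lr_block n Z *\<^sub>v elast n = 0\<^sub>v (n+2) \<and> top_row n Z $ (n+1) = 0"
proof
  assume Z: "Z \<in> galg n K"
  obtain X x where Zx: "Z = gv n (mat_of_row (K *\<^sub>v x)) X" "X \<in> orth_alg (n+2) K" "x \<in> carrier_vec (n+2)"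
    "X *\<^sub>v elast n = 0\<^sub>v (n+2)" "x $ 0 = 0" using galg_elim[OF Z] by blast
  have Xc: "X \<in> carrier_mat (n+2) (n+2)" using Zx(2) by (rule oa_c)
  have lr: "lr_block n Z = X" using Zx(1) Xc by (simp add: lr_gv)
  have tr: "top_row n Z = K *\<^sub>v x" using Zx(1,3) Xc by (simp add: top_gv)
  have col0: "\<forall>i<n+3. Z $$ (i,0) = 0" using Zx(1) Xc by (auto simp: gv_def)
  show "Z \<in> carrier_mat (n+3) (n+3) \<and> (\<forall>i<n+3. Z $$ (i,0) = 0)
   \<and> lr_block n Z \<in> orth_alg (n+2) K \<and> lr_block n Z *\<^sub>v elast n = 0\<^sub>v (n+2) \<and> top_row n Z $ (n+1) = 0"
    using galg_c[OF Z] col0 lr tr Zx Kv_last by simp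
next
  assume H: "Z \<in> carrier_mat (n+3) (n+3) \<and> (\<forall>i<n+3. Z $$ (i,0) = 0)
   \<and> lr_block n Z \<in> orth_alg (n+2) K \<and> lr_block n Z *\<^sub>v elast n = 0\<^sub>v (n+2) \<and> top_row n Z $ (n+1) = 0"
  define x where "x = K *\<^sub>v top_row n Z"
  have tc: "top_row n Z \<in> carrier_vec (n+2)" by (simp add: top_row_def)
  have xc: "x \<in> carrier_vec (n+2)" using tc by (simp add: x_def)
  have Kx: "K *\<^sub>v x = top_row n Z" using KKv[OF tc] by (simp add: x_def)
  have x0: "x $ 0 = 0" using K0[OF tc] H by (simp add: x_def)
  have lc: "lr_block n Z \<in> carrier_mat (n+2) (n+2)" by (simp add: lr_block_def)
  have "Z = gv n (mat_of_row (K *\<^sub>v x)) (lr_block n Z)"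
  proof (rule eq_matI)
    fix i j assume ij: "i < dim_row (gv n (mat_of_row (K *\<^sub>v x)) (lr_block n Z))"
       "j < dim_col (gv n (mat_of_row (K *\<^sub>v x)) (lr_block n Z))"
    then have i: "i < n+3" and j: "j < n+3" using lc by (auto simp: gv_def)
    show "Z $$ (i, j) = gv n (mat_of_row (K *\<^sub>v x)) (lr_block n Z) $$ (i, j)"
    proof (cases "j = 0")
      case True then show ?thesis using H i lc by (auto simp: gv_def)
    next
      case False
      then have j1: "j - 1 < n+2" "Suc (j - 1) = j" using j by auto
      show ?thesis
      proof (cases "i = 0")
        case True then show ?thesis using False j1 lc Kx by (auto simp: gv_def top_row_def)
      next
        case False
        then have i1: "i - 1 < n+2" "Suc (i - 1) = i" using i by auto
        then show ?thesis using False \<open>j \<noteq> 0\<close> j1 lc by (auto simp: gv_def lr_block_def)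
      qed
    qed
  qed (use H lc in \<open>auto simp: gv_def\<close>)
  moreover have "gv n (mat_of_row (K *\<^sub>v x)) (lr_block n Z) \<in> galg n K"
    by (rule galg_intro[OF _ xc _ x0]) (use H in auto)
  ultimately show "Z \<in> galg n K" by simp
qed

lemma lr_c[simp]: "lr_block n Z \<in> carrier_mat (n+2) (n+2)" by (simp add: lr_block_def)
lemma top_c[simp]: "top_row n Z \<in> carrier_vec (n+2)" by (simp add: top_row_def)

lemma lr_add: "Z1 \<in> carrier_mat (n+3) (n+3) \<Longrightarrow> Z2 \<in> carrier_mat (n+3) (n+3) \<Longrightarrow>
  lr_block n (Z1 + Z2) = lr_block n Z1 + lr_block n Z2"
  by (rule eq_matI) (auto simp: lr_block_def)

lemma lr_smult: "Z \<in> carrier_mat (n+3) (n+3) \<Longrightarrow> lr_block n (c \<cdot>\<^sub>m Z) = c \<cdot>\<^sub>m lr_block n Z"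
  by (rule eq_matI) (auto simp: lr_block_def)

lemma top_add: "Z1 \<in> carrier_mat (n+3) (n+3) \<Longrightarrow> Z2 \<in> carrier_mat (n+3) (n+3) \<Longrightarrow>
  top_row n (Z1 + Z2) = top_row n Z1 + top_row n Z2"
  by (rule eq_vecI) (auto simp: top_row_def)

lemma top_smult: "Z \<in> carrier_mat (n+3) (n+3) \<Longrightarrow> top_row n (c \<cdot>\<^sub>m Z) = c \<cdot>\<^sub>v top_row n Z"
  by (rule eq_vecI) (auto simp: top_row_def)

lemma smult_mat_vec: assumes "A \<in> carrier_mat m k" "v \<in> carrier_vec k"
  shows "(c \<cdot>\<^sub>m A) *\<^sub>v v = c \<cdot>\<^sub>v (A *\<^sub>v (v :: real vec))"
  by (rule eq_vecI) (use assms in \<open>auto simp: scalar_prod_def sum_distrib_left mult.assoc\<close>)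

lemma mu_lin: assumes Y: "Y \<in> carrier_mat (n+2) (n+2)" and y: "y \<in> carrier_vec (n+2)"
  shows "lin_functional n K (mu n Y y)"
  unfolding lin_functional_def
proof (intro conjI ballI allI)
  fix Z1 Z2 assume Z: "Z1 \<in> galg n K" "Z2 \<in> galg n K"
  have c: "Z1 \<in> carrier_mat (n+3) (n+3)" "Z2 \<in> carrier_mat (n+3) (n+3)" using Z galg_c by auto
  have "Y * lr_block n (Z1 + Z2) = Y * lr_block n Z1 + Y * lr_block n Z2"
    unfolding lr_add[OF c] by (rule mult_add_distrib_mat[OF Y lr_c lr_c])
  then have t: "mtrace (Y * lr_block n (Z1 + Z2)) = mtrace (Y * lr_block n Z1) + mtrace (Y * lr_block n Z2)"
    using mtrace_add[OF mult_carrier_mat[OF Y lr_c] mult_carrier_mat[OF Y lr_c]] by simp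
  have d: "top_row n (Z1 + Z2) \<bullet> y = top_row n Z1 \<bullet> y + top_row n Z2 \<bullet> y"
    unfolding top_add[OF c] by (rule add_scalar_prod_distrib[OF top_c top_c y])
  show "mu n Y y (Z1 + Z2) = mu n Y y Z1 + mu n Y y Z2"
    unfolding mu_def t d by (simp add: algebra_simps)
next
  fix c and Z assume Z: "Z \<in> galg n K"
  have cz: "Z \<in> carrier_mat (n+3) (n+3)" using Z galg_c by auto
  have "Y * lr_block n (c \<cdot>\<^sub>m Z) = c \<cdot>\<^sub>m (Y * lr_block n Z)"
    unfolding lr_smult[OF cz] by (rule mult_smult_distrib[OF Y lr_c])
  then have t: "mtrace (Y * lr_block n (c \<cdot>\<^sub>m Z)) = c * mtrace (Y * lr_block n Z)"
    using mtrace_smult[OF mult_carrier_mat[OF Y lr_c]] by simp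
  have d: "top_row n (c \<cdot>\<^sub>m Z) \<bullet> y = c * (top_row n Z \<bullet> y)"
    unfolding top_smult[OF cz] by (rule smult_scalar_prod_distrib[OF top_c y])
  show "mu n Y y (c \<cdot>\<^sub>m Z) = c * mu n Y y Z"
    unfolding mu_def t d by (simp add: algebra_simps)
qed

lemma galg_add: assumes "Z1 \<in> galg n K" "Z2 \<in> galg n K" shows "Z1 + Z2 \<in> galg n K"
proof -
  have c: "Z1 \<in> carrier_mat (n+3) (n+3)" "Z2 \<in> carrier_mat (n+3) (n+3)" using assms galg_c by auto
  have h1: "\<forall>i<n+3. Z1 $$ (i,0) = 0" "lr_block n Z1 \<in> orth_alg (n+2) K" "lr_block n Z1 *\<^sub>v elast n = 0\<^sub>v (n+2)" "top_row n Z1 $ (n+1) = 0"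
    using assms(1) unfolding galg_iff by auto
  have h2: "\<forall>i<n+3. Z2 $$ (i,0) = 0" "lr_block n Z2 \<in> orth_alg (n+2) K" "lr_block n Z2 *\<^sub>v elast n = 0\<^sub>v (n+2)" "top_row n Z2 $ (n+1) = 0"
    using assms(2) unfolding galg_iff by auto
  have "(lr_block n Z1 + lr_block n Z2) *\<^sub>v elast n = lr_block n Z1 *\<^sub>v elast n + lr_block n Z2 *\<^sub>v elast n"
    by (rule add_mult_distrib_mat_vec[OF lr_c lr_c elast_c])
  then have e: "lr_block n (Z1 + Z2) *\<^sub>v elast n = 0\<^sub>v (n+2)" unfolding lr_add[OF c] using h1(3) h2(3) by simp
  have t: "top_row n (Z1 + Z2) $ (n+1) = 0" unfolding top_add[OF c] using h1(4) h2(4) by (simp add: top_row_def)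
  show ?thesis unfolding galg_iff
    using c h1 h2 e t oa_add[OF h1(2) h2(2)] by (simp add: lr_add)
qed

lemma galg_smult: assumes "Z \<in> galg n K" shows "c \<cdot>\<^sub>m Z \<in> galg n K"
proof -
  have cz: "Z \<in> carrier_mat (n+3) (n+3)" using assms galg_c by auto
  have h: "\<forall>i<n+3. Z $$ (i,0) = 0" "lr_block n Z \<in> orth_alg (n+2) K" "lr_block n Z *\<^sub>v elast n = 0\<^sub>v (n+2)" "top_row n Z $ (n+1) = 0"
    using assms unfolding galg_iff by auto
  have e: "lr_block n (c \<cdot>\<^sub>m Z) *\<^sub>v elast n = 0\<^sub>v (n+2)"
    unfolding lr_smult[OF cz] smult_mat_vec[OF lr_c elast_c] h(3) by (rule eq_vecI) auto
  show ?thesis unfolding galg_iff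
    using cz h e oa_smult[OF h(2)] by (simp add: lr_smult top_smult top_row_def)
qed

lemma galg_zero: "0\<^sub>m (n+3) (n+3) \<in> galg n K"
proof -
  have "lr_block n (0\<^sub>m (n+3) (n+3)) = 0\<^sub>m (n+2) (n+2)" by (rule eq_matI) (auto simp: lr_block_def)
  moreover have "0\<^sub>m (n+2) (n+2) *\<^sub>v elast n = 0\<^sub>v (n+2)" by (rule eq_vecI) (auto simp: elast_def)
  ultimately show ?thesis unfolding galg_iff using oa_zero by (simp add: top_row_def)
qed

lemma lin_zero: assumes "lin_functional n K f" shows "f (0\<^sub>m (n+3) (n+3)) = 0"
proof -
  have "f (0 \<cdot>\<^sub>m 0\<^sub>m (n+3) (n+3)) = 0 * f (0\<^sub>m (n+3) (n+3))"
    using assms galg_zero unfolding lin_functional_def by blast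
  moreover have "(0::real) \<cdot>\<^sub>m 0\<^sub>m (n+3) (n+3) = 0\<^sub>m (n+3) (n+3)" by (rule eq_matI) auto
  ultimately show ?thesis by simp
qed

lemma lin_sum: assumes f: "lin_functional n K f" and A: "finite A" and F: "\<forall>k\<in>A. F k \<in> galg n K"
  shows "msum (n+3) A c F \<in> galg n K \<and> f (msum (n+3) A c F) = (\<Sum>k\<in>A. c k * f (F k))"
  using A F
proof (induction A rule: finite_induct)
  case empty
  have "msum (n+3) {} c F = 0\<^sub>m (n+3) (n+3)" by (rule eq_matI) (auto simp: msum_def)
  then show ?case using galg_zero lin_zero[OF f] by simp
next
  case (insert k A)
  have Fk: "F k \<in> galg n K" using insert by simp
  have IH: "msum (n+3) A c F \<in> galg n K" "f (msum (n+3) A c F) = (\<Sum>k\<in>A. c k * f (F k))" using insert by auto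
  have Fkc: "F k \<in> carrier_mat (n+3) (n+3)" using Fk galg_c by auto
  have eq: "msum (n+3) (insert k A) c F = c k \<cdot>\<^sub>m F k + msum (n+3) A c F"
    by (rule eq_matI) (use insert Fkc in \<open>auto simp: msum_def\<close>)
  have s: "c k \<cdot>\<^sub>m F k \<in> galg n K" by (rule galg_smult[OF Fk])
  have "f (c k \<cdot>\<^sub>m F k + msum (n+3) A c F) = f (c k \<cdot>\<^sub>m F k) + f (msum (n+3) A c F)"
    using f s IH(1) unfolding lin_functional_def by blast
  moreover have "f (c k \<cdot>\<^sub>m F k) = c k * f (F k)" using f Fk unfolding lin_functional_def by blast
  ultimately show ?case unfolding eq using galg_add[OF s IH(1)] IH(2) insert by simp
qed

end

definition Bm :: "nat \<Rightarrow> real mat \<Rightarrow> nat \<Rightarrow> nat \<Rightarrow> real mat" where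
  "Bm n K a b = gv n (mat_of_row (K *\<^sub>v 0\<^sub>v (n+2))) (Lop K (unit_vec (n+2) a) (unit_vec (n+2) b))"

definition Cm :: "nat \<Rightarrow> real mat \<Rightarrow> nat \<Rightarrow> real mat" where
  "Cm n K j = gv n (mat_of_row (K *\<^sub>v (K *\<^sub>v unit_vec (n+2) j))) (0\<^sub>m (n+2) (n+2))"

context KS begin

lemma Kv0: "K *\<^sub>v 0\<^sub>v (n+2) = 0\<^sub>v (n+2)"
  by (rule eq_vecI) (use Kc in auto)

lemma Kunit: "b < n+2 \<Longrightarrow> j < n+2 \<Longrightarrow> (K *\<^sub>v unit_vec (n+2) b) $ j = K $$ (j,b)"
  using Kc by simp

lemma Bm_in: assumes a: "1 \<le> a" "a < n+2" and b: "1 \<le> b" "b < n+2"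
  shows "Bm n K a b \<in> galg n K"
proof -
  define ea where "ea = (unit_vec (n+2) a :: real vec)"
  define eb where "eb = (unit_vec (n+2) b :: real vec)"
  have eac: "ea \<in> carrier_vec (n+2)" and ebc: "eb \<in> carrier_vec (n+2)" by (auto simp: ea_def eb_def)
  have L: "Lop K ea eb \<in> orth_alg (n+2) K" by (rule Lop_oa[OF eac ebc])
  have eb0: "eb $ 0 = 0" using b by (simp add: eb_def)
  have ea0: "ea $ 0 = 0" using a by (simp add: ea_def)
  have "(K *\<^sub>v eb) \<bullet> elast n = 0" using dot_elast[OF Kv_c[OF ebc]] Kv_last[OF ebc] eb0 by simp
  moreover have "(K *\<^sub>v ea) \<bullet> elast n = 0" using dot_elast[OF Kv_c[OF eac]] Kv_last[OF eac] ea0 by simp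
  ultimately have Le: "Lop K ea eb *\<^sub>v elast n = 0\<^sub>v (n+2)"
    using Lop_mv[OF eac ebc elast_c] eac ebc by (auto intro!: eq_vecI)
  have z: "(0\<^sub>v (n+2) :: real vec) \<in> carrier_vec (n+2)" by simp
  show ?thesis unfolding Bm_def ea_def[symmetric] eb_def[symmetric]
    by (rule galg_intro[OF L z Le]) simp
qed

lemma Cm_in: assumes j: "j < n+1" shows "Cm n K j \<in> galg n K"
proof -
  define ej where "ej = (unit_vec (n+2) j :: real vec)"
  have ejc: "ej \<in> carrier_vec (n+2)" by (simp add: ej_def)
  have x: "K *\<^sub>v ej \<in> carrier_vec (n+2)" using ejc by simp
  have x0: "(K *\<^sub>v ej) $ 0 = 0" using K0[OF ejc] j by (simp add: ej_def)
  show ?thesis unfolding Cm_def ej_def[symmetric]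
    by (rule galg_intro[OF oa_zero x]) (use x0 in auto)
qed

lemma Bm_idx: assumes i: "i < n+3" and j: "j < n+3" and a: "a < n+2" and b: "b < n+2"
  shows "Bm n K a b $$ (i,j) = (if i = 0 \<or> j = 0 then 0 else
     (if i - 1 = a then K $$ (j-1,b) else 0) - (if i - 1 = b then K $$ (j-1,a) else 0))"
proof (cases "i = 0 \<or> j = 0")
  case True
  then show ?thesis using i j Kv0 by (auto simp: Bm_def gv_def)
next
  case False
  then have i1: "i - 1 < n+2" "\<not> i < 1" and j1: "j - 1 < n+2" "\<not> j < 1" using i j by auto
  have "Bm n K a b $$ (i,j) = Lop K (unit_vec (n+2) a) (unit_vec (n+2) b) $$ (i-1,j-1)"
    using i j i1 j1 by (simp add: Bm_def gv_def)
  also have "\<dots> = (if i - 1 = a then K $$ (j-1,b) else 0) - (if i - 1 = b then K $$ (j-1,a) else 0)"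
    using Lop_idx[of "unit_vec (n+2) a" "i-1" "j-1" "unit_vec (n+2) b"] i1 j1 a b Kunit by simp
  finally show ?thesis using False by simp
qed

lemma Cm_idx: assumes i: "i < n+3" and j: "j < n+3" and k: "k < n+2"
  shows "Cm n K k $$ (i,j) = (if i = 0 \<and> j \<noteq> 0 \<and> j - 1 = k then 1 else 0)"
proof -
  have e: "K *\<^sub>v (K *\<^sub>v unit_vec (n+2) k) = unit_vec (n+2) k" by (rule KKv) simp
  show ?thesis using i j k unfolding Cm_def e by (auto simp: gv_def)
qed

lemma KM_sum: "M \<in> carrier_mat (n+2) (n+2) \<Longrightarrow> i < n+2 \<Longrightarrow> j < n+2 \<Longrightarrow>
   (\<Sum>k<n+2. K $$ (i,k) * M $$ (k,j)) = (K * M) $$ (i,j)"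
  using Kc by (simp add: scalar_prod_def atLeast0LessThan)

end

lemma lessThan_insert0: "{..<n+2} = insert 0 {1..<n+2::nat}"
  by auto

context KS begin

lemma S_props: assumes X: "X \<in> orth_alg (n+2) K" and Xe: "X *\<^sub>v elast n = 0\<^sub>v (n+2)"
  shows "X * K \<in> carrier_mat (n+2) (n+2)" "\<And>i. i < n+2 \<Longrightarrow> (X * K) $$ (i,0) = 0"
    "\<And>i j. i < n+2 \<Longrightarrow> j < n+2 \<Longrightarrow> (X * K) $$ (i,j) = - (X * K) $$ (j,i)"
    "(X * K) * K = X"
proof -
  have Xc: "X \<in> carrier_mat (n+2) (n+2)" using X by (rule oa_c)
  note dims = carrier_matD[OF Xc] carrier_matD[OF Kc]
  show Sc: "X * K \<in> carrier_mat (n+2) (n+2)" using Xc Kc by simp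
  show SKK: "(X * K) * K = X" using dims KK by (simp add: assoc')
  show "(X * K) $$ (i,0) = 0" if i: "i < n+2" for i
  proof -
    have "(X * K) *\<^sub>v unit_vec (n+2) 0 = X *\<^sub>v (K *\<^sub>v unit_vec (n+2) 0)" using dims by (simp add: assoc_mv')
    also have "\<dots> = 0\<^sub>v (n+2)" using K_e0 Xe by simp
    finally have "((X * K) *\<^sub>v unit_vec (n+2) 0) $ i = 0" using i by simp
    moreover have "dim_row (X * K) = n+2" "dim_col (X * K) = n+2" using Sc by auto
    ultimately show ?thesis using i by simp
  qed
  have tX: "transpose_mat X = - (K * X * K)"
  proof -
    have e: "transpose_mat X * K = - (K * X)" using oa_KX[OF X] by simp
    have "transpose_mat X = transpose_mat X * K * K" using dims KK by (simp add: assoc')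
    also have "\<dots> = - (K * X) * K" unfolding e ..
    also have "\<dots> = - (K * X * K)" by (rule uminus_mult_left_mat) (use dims in simp)
    finally show ?thesis .
  qed
  have tS: "transpose_mat (X * K) = - (X * K)"
  proof -
    have "transpose_mat (X * K) = transpose_mat K * transpose_mat X" by (rule transpose_mult[OF Xc Kc])
    also have "\<dots> = K * (- (K * X * K))" using Ks tX by simp
    also have "\<dots> = - (K * K * (X * K))" using dims by (simp add: assoc')
    also have "\<dots> = - (X * K)" using KK dims by simp
    finally show ?thesis .
  qed
  show "(X * K) $$ (i,j) = - (X * K) $$ (j,i)" if "i < n+2" "j < n+2" for i j
  proof -
    have "transpose_mat (X * K) $$ (j,i) = (- (X * K)) $$ (j,i)" using tS by simp
    then show ?thesis using that dims by simp
  qed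
qed

lemma decomp: assumes Sc: "S \<in> carrier_mat (n+2) (n+2)" and S0: "\<And>i. i < n+2 \<Longrightarrow> S $$ (i,0) = 0"
  and anti: "\<And>i j. i < n+2 \<Longrightarrow> j < n+2 \<Longrightarrow> S $$ (i,j) = - S $$ (j,i)"
  and i: "i < n+2" and j: "j < n+2"
  shows "(\<Sum>a\<in>{1..<n+2}. \<Sum>b\<in>{1..<n+2}. S $$ (a,b) / 2 * ((if i = a then K $$ (j,b) else 0) - (if i = b then K $$ (j,a) else 0)))
     = (S * K) $$ (i,j)"
proof -
  let ?I = "{1..<n+2}"
  have s1: "(\<Sum>a\<in>?I. \<Sum>b\<in>?I. S $$ (a,b) / 2 * (if i = a then K $$ (j,b) else 0))
      = (if i \<in> ?I then (\<Sum>b\<in>?I. S $$ (i,b) / 2 * K $$ (j,b)) else 0)"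
  proof -
    have "(\<Sum>a\<in>?I. \<Sum>b\<in>?I. S $$ (a,b) / 2 * (if i = a then K $$ (j,b) else 0))
       = (\<Sum>a\<in>?I. if i = a then (\<Sum>b\<in>?I. S $$ (a,b) / 2 * K $$ (j,b)) else 0)"
      by (rule sum.cong) auto
    also have "\<dots> = (if i \<in> ?I then (\<Sum>b\<in>?I. S $$ (i,b) / 2 * K $$ (j,b)) else 0)"
      by (simp add: sum.delta)
    finally show ?thesis .
  qed
  have s2: "(\<Sum>a\<in>?I. \<Sum>b\<in>?I. S $$ (a,b) / 2 * (if i = b then K $$ (j,a) else 0))
      = (if i \<in> ?I then (\<Sum>a\<in>?I. S $$ (a,i) / 2 * K $$ (j,a)) else 0)"
  proof -
    have "(\<Sum>a\<in>?I. \<Sum>b\<in>?I. S $$ (a,b) / 2 * (if i = b then K $$ (j,a) else 0))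
       = (\<Sum>a\<in>?I. if i \<in> ?I then S $$ (a,i) / 2 * K $$ (j,a) else 0)"
    proof (rule sum.cong)
      fix a assume "a \<in> ?I"
      have "(\<Sum>b\<in>?I. S $$ (a,b) / 2 * (if i = b then K $$ (j,a) else 0)) = (\<Sum>b\<in>?I. if i = b then S $$ (a,i) / 2 * K $$ (j,a) else 0)"
        by (rule sum.cong) auto
      also have "\<dots> = (if i \<in> ?I then S $$ (a,i) / 2 * K $$ (j,a) else 0)" by (simp add: sum.delta)
      finally show "(\<Sum>b\<in>?I. S $$ (a,b) / 2 * (if i = b then K $$ (j,a) else 0)) = (if i \<in> ?I then S $$ (a,i) / 2 * K $$ (j,a) else 0)" .
    qed simp
    also have "\<dots> = (if i \<in> ?I then (\<Sum>a\<in>?I. S $$ (a,i) / 2 * K $$ (j,a)) else 0)"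
      by (cases "i \<in> ?I") (simp_all only: if_True if_False sum.neutral_const)
    finally show ?thesis .
  qed
  have main: "(\<Sum>a\<in>?I. \<Sum>b\<in>?I. S $$ (a,b) / 2 * ((if i = a then K $$ (j,b) else 0) - (if i = b then K $$ (j,a) else 0)))
     = (\<Sum>a\<in>?I. \<Sum>b\<in>?I. S $$ (a,b) / 2 * (if i = a then K $$ (j,b) else 0))
      - (\<Sum>a\<in>?I. \<Sum>b\<in>?I. S $$ (a,b) / 2 * (if i = b then K $$ (j,a) else 0))"
    by (simp add: right_diff_distrib sum_subtractf)
  have anti2: "(\<Sum>a\<in>?I. S $$ (a,i) / 2 * K $$ (j,a)) = - (\<Sum>b\<in>?I. S $$ (i,b) / 2 * K $$ (j,b))"
  proof -
    have "(\<Sum>a\<in>?I. S $$ (a,i) / 2 * K $$ (j,a)) = (\<Sum>b\<in>?I. - (S $$ (i,b) / 2 * K $$ (j,b)))"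
    proof (rule sum.cong)
      fix a assume a: "a \<in> ?I"
      have "S $$ (a,i) = - S $$ (i,a)" using anti[of a i] a i by simp
      then show "S $$ (a,i) / 2 * K $$ (j,a) = - (S $$ (i,a) / 2 * K $$ (j,a))" by simp
    qed simp
    then show ?thesis by (simp add: sum_negf)
  qed
  have lhs: "(\<Sum>a\<in>?I. \<Sum>b\<in>?I. S $$ (a,b) / 2 * ((if i = a then K $$ (j,b) else 0) - (if i = b then K $$ (j,a) else 0)))
     = (\<Sum>b\<in>?I. S $$ (i,b) * K $$ (b,j))"
  proof (cases "i \<in> ?I")
    case True
    have "(\<Sum>b\<in>?I. S $$ (i,b) / 2 * K $$ (j,b)) - (- (\<Sum>b\<in>?I. S $$ (i,b) / 2 * K $$ (j,b)))
       = (\<Sum>b\<in>?I. S $$ (i,b) * K $$ (b,j))"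
    proof -
      have "(\<Sum>b\<in>?I. S $$ (i,b) / 2 * K $$ (j,b)) = (\<Sum>b\<in>?I. S $$ (i,b) * K $$ (b,j) / 2)"
        by (rule sum.cong) (use j Ksym in auto)
      also have "\<dots> = (\<Sum>b\<in>?I. S $$ (i,b) * K $$ (b,j)) / 2" by (rule sum_divide_distrib[symmetric])
      finally show ?thesis by simp
    qed
    then show ?thesis unfolding main s1 s2 anti2 using True by simp
  next
    case False
    then have "i = 0" using i by simp
    have "S $$ (0,b) = 0" if "b \<in> ?I" for b using anti[of 0 b] S0[of b] that by simp
    then have "(\<Sum>b\<in>?I. S $$ (i,b) * K $$ (b,j)) = 0" using \<open>i = 0\<close> by simp
    then show ?thesis unfolding main s1 s2 if_not_P[OF False] by simp
  qed
  have "(S * K) $$ (i,j) = (\<Sum>b<n+2. S $$ (i,b) * K $$ (b,j))"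
    using Sc Kc i j by (simp add: scalar_prod_def atLeast0LessThan)
  also have "\<dots> = (\<Sum>b\<in>?I. S $$ (i,b) * K $$ (b,j))"
    unfolding lessThan_insert0 using S0[OF i] by simp
  finally show ?thesis using lhs by simp
qed

end

context KS begin

lemma surj: assumes f: "lin_functional n K f"
  shows "\<exists>Y y. Y \<in> orth_alg (n+2) K \<and> y \<in> carrier_vec (n+2) \<and> (\<forall>Z\<in>galg n K. f Z = mu n Y y Z)"
proof -
  let ?I = "{1..<n+2}"
  define fB where "fB a b = f (Bm n K a b)" for a b
  define T where "T = mat (n+2) (n+2) (\<lambda>(i,j). if 1 \<le> i \<and> 1 \<le> j then (fB j i - fB i j) / 2 else 0)"
  define Y where "Y = K * T"
  define y where "y = vec (n+2) (\<lambda>j. if j < n+1 then f (Cm n K j) else 0)"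
  have Tc: "T \<in> carrier_mat (n+2) (n+2)" by (simp add: T_def)
  have Yc: "Y \<in> carrier_mat (n+2) (n+2)" using Kc Tc by (simp add: Y_def)
  have yc: "y \<in> carrier_vec (n+2)" by (simp add: y_def)
  have KY: "K * Y = T" unfolding Y_def using Kc Tc KK by (simp flip: assoc_mult_mat[of K "n+2" "n+2" K "n+2" T "n+2"])
  have Yo: "Y \<in> orth_alg (n+2) K" unfolding oa_iff
  proof (intro conjI allI impI)
    show "Y \<in> carrier_mat (n+2) (n+2)" by (rule Yc)
    fix i j assume ij: "i < n+2" "j < n+2"
    show "(\<Sum>k<n+2. K $$ (i,k) * Y $$ (k,j)) = - (\<Sum>k<n+2. K $$ (j,k) * Y $$ (k,i))"
      unfolding KM_sum[OF Yc ij] KM_sum[OF Yc ij(2,1)] KY using ij by (auto simp: T_def field_simps)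
  qed
  have main: "f Z = mu n Y y Z" if Z: "Z \<in> galg n K" for Z
  proof -
    have Zc: "Z \<in> carrier_mat (n+3) (n+3)" and col0: "\<forall>i<n+3. Z $$ (i,0) = 0"
      and Xo: "lr_block n Z \<in> orth_alg (n+2) K" and Xe: "lr_block n Z *\<^sub>v elast n = 0\<^sub>v (n+2)"
      and r0: "top_row n Z $ (n+1) = 0" using Z unfolding galg_iff by auto
    define X where "X = lr_block n Z"
    define r where "r = top_row n Z"
    define S where "S = X * K"
    have Sc: "S \<in> carrier_mat (n+2) (n+2)" using S_props(1)[OF Xo Xe] unfolding S_def X_def .
    have S0: "\<And>i. i < n+2 \<Longrightarrow> S $$ (i,0) = 0" using S_props(2)[OF Xo Xe] unfolding S_def X_def .
    have anti: "\<And>i j. i < n+2 \<Longrightarrow> j < n+2 \<Longrightarrow> S $$ (i,j) = - S $$ (j,i)"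
      using S_props(3)[OF Xo Xe] unfolding S_def X_def .
    have SK: "S * K = X" using S_props(4)[OF Xo Xe] unfolding S_def X_def .
    define M1 where "M1 = msum (n+3) (?I \<times> ?I) (\<lambda>p. S $$ (fst p, snd p) / 2) (\<lambda>p. Bm n K (fst p) (snd p))"
    define M2 where "M2 = msum (n+3) {..<n+1} (\<lambda>k. r $ k) (Cm n K)"
    have L1: "M1 \<in> galg n K \<and> f M1 = (\<Sum>p\<in>?I \<times> ?I. S $$ (fst p, snd p) / 2 * f (Bm n K (fst p) (snd p)))"
      unfolding M1_def by (rule lin_sum[OF f]) (auto intro: Bm_in)
    have L2: "M2 \<in> galg n K \<and> f M2 = (\<Sum>k<n+1. r $ k * f (Cm n K k))"
      unfolding M2_def by (rule lin_sum[OF f]) (auto intro: Cm_in)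
    have ZM: "Z = M1 + M2"
    proof (rule eq_matI)
      fix i j assume ij: "i < dim_row (M1 + M2)" "j < dim_col (M1 + M2)"
      then have i: "i < n+3" and j: "j < n+3" by (auto simp: M2_def msum_def)
      have e1: "M1 $$ (i,j) = (\<Sum>p\<in>?I \<times> ?I. S $$ (fst p, snd p) / 2 * Bm n K (fst p) (snd p) $$ (i,j))"
        using i j by (simp add: M1_def msum_def)
      have e2: "M2 $$ (i,j) = (\<Sum>k<n+1. r $ k * Cm n K k $$ (i,j))"
        using i j by (simp add: M2_def msum_def)
      have e12: "(M1 + M2) $$ (i,j) = M1 $$ (i,j) + M2 $$ (i,j)" using i j by (simp add: M1_def M2_def msum_def)
      have B0: "M1 $$ (i,j) = 0" if "i = 0 \<or> j = 0"
        unfolding e1 using that i j by (intro sum.neutral) (auto simp: Bm_idx)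
      have C0: "M2 $$ (i,j) = 0" if "i \<noteq> 0 \<or> j = 0"
        unfolding e2 using that i j by (intro sum.neutral) (auto simp: Cm_idx)
      show "Z $$ (i,j) = (M1 + M2) $$ (i,j)"
      proof (cases "j = 0")
        case True
        then show ?thesis using e12 B0 C0 col0 i by simp
      next
        case jn: False
        show ?thesis
        proof (cases "i = 0")
          case True
          have "M2 $$ (i,j) = (\<Sum>k<n+1. if j - 1 = k then r $ k else 0)"
            unfolding e2 using True jn i j by (intro sum.cong) (auto simp: Cm_idx)
          also have "\<dots> = (if j - 1 < n+1 then r $ (j-1) else 0)" by (simp add: sum.delta)
          also have "\<dots> = r $ (j-1)"
          proof (cases "j - 1 < n+1")
            case False
            then have "j - 1 = n+1" using j by simp
            then show ?thesis using r0 False by (simp add: r_def)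
          qed simp
          also have "\<dots> = Z $$ (i,j)"
          proof -
            have "Suc (j - 1) = j" using jn by simp
            then show ?thesis using True jn j by (simp add: r_def top_row_def)
          qed
          finally show ?thesis using e12 B0 True by simp
        next
          case i_n: False
          have i1: "i - 1 < n+2" and j1: "j - 1 < n+2" using i j i_n jn by auto
          have "M1 $$ (i,j) = (\<Sum>p\<in>?I \<times> ?I. S $$ (fst p, snd p) / 2 *
              ((if i - 1 = fst p then K $$ (j-1, snd p) else 0) - (if i - 1 = snd p then K $$ (j-1, fst p) else 0)))"
            unfolding e1 using i j i_n jn by (intro sum.cong) (auto simp: Bm_idx)
          also have "\<dots> = (\<Sum>a\<in>?I. \<Sum>b\<in>?I. S $$ (a,b) / 2 *
              ((if i - 1 = a then K $$ (j-1, b) else 0) - (if i - 1 = b then K $$ (j-1, a) else 0)))"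
            by (simp add: sum.cartesian_product split_def)
          also have "\<dots> = (S * K) $$ (i-1,j-1)" by (rule decomp[OF Sc S0 anti i1 j1])
          also have "\<dots> = Z $$ (i,j)" using SK i1 j1 i_n jn by (simp add: X_def lr_block_def)
          finally show ?thesis using e12 C0 i_n by simp
        qed
      qed
    qed (use Zc in \<open>auto simp: M1_def M2_def msum_def\<close>)
    have fZ: "f Z = f M1 + f M2" using ZM f L1 L2 unfolding lin_functional_def by blast
    have Xc: "X \<in> carrier_mat (n+2) (n+2)" by (simp add: X_def)
    note dims = carrier_matD[OF Kc] carrier_matD[OF Tc] carrier_matD[OF Xc]
    have "mtrace (Y * X) = mtrace (K * (T * X))" unfolding Y_def using dims by (simp add: assoc')
    also have "\<dots> = mtrace ((T * X) * K)" by (rule mtrace_comm) (use Kc Tc Xc in auto)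
    also have "(T * X) * K = T * S" unfolding S_def using dims by (simp add: assoc')
    also have "mtrace (T * S) = (\<Sum>i<n+2. \<Sum>j<n+2. T $$ (i,j) * S $$ (j,i))" by (rule mtrace_mult[OF Tc Sc])
    also have "\<dots> = (\<Sum>i\<in>?I. \<Sum>j\<in>?I. T $$ (i,j) * S $$ (j,i))"
      unfolding lessThan_insert0 by (simp add: T_def)
    also have "\<dots> = (\<Sum>i\<in>?I. \<Sum>j\<in>?I. fB j i * S $$ (j,i) / 2 - fB i j * S $$ (j,i) / 2)"
      by (intro sum.cong refl) (auto simp: T_def field_simps)
    also have "\<dots> = (\<Sum>i\<in>?I. \<Sum>j\<in>?I. fB j i * S $$ (j,i) / 2) - (\<Sum>i\<in>?I. \<Sum>j\<in>?I. fB i j * S $$ (j,i) / 2)"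
      by (simp add: sum_subtractf)
    also have "(\<Sum>i\<in>?I. \<Sum>j\<in>?I. fB j i * S $$ (j,i) / 2) = (\<Sum>a\<in>?I. \<Sum>b\<in>?I. fB a b * S $$ (a,b) / 2)"
      by (rule sum.swap)
    also have "(\<Sum>i\<in>?I. \<Sum>j\<in>?I. fB i j * S $$ (j,i) / 2) = - (\<Sum>a\<in>?I. \<Sum>b\<in>?I. fB a b * S $$ (a,b) / 2)"
    proof -
      have "(\<Sum>i\<in>?I. \<Sum>j\<in>?I. fB i j * S $$ (j,i) / 2) = (\<Sum>i\<in>?I. \<Sum>j\<in>?I. - (fB i j * S $$ (i,j) / 2))"
      proof (intro sum.cong refl)
        fix i j assume "i \<in> ?I" "j \<in> ?I"
        then have "S $$ (j,i) = - S $$ (i,j)" using anti[of j i] by simp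
        then show "fB i j * S $$ (j,i) / 2 = - (fB i j * S $$ (i,j) / 2)" by simp
      qed
      then show ?thesis by (simp add: sum_negf)
    qed
    finally have tr: "mtrace (Y * X) = 2 * (\<Sum>a\<in>?I. \<Sum>b\<in>?I. S $$ (a,b) / 2 * fB a b)"
      by (simp add: sum_distrib_left algebra_simps)
    have f1: "f M1 = (\<Sum>a\<in>?I. \<Sum>b\<in>?I. S $$ (a,b) / 2 * fB a b)"
      using L1 by (simp add: fB_def sum.cartesian_product split_def)
    have ry: "r \<bullet> y = (\<Sum>k<n+1. r $ k * f (Cm n K k))"
    proof -
      have "r \<bullet> y = (\<Sum>k<n+2. r $ k * y $ k)" by (simp add: scalar_prod_def y_def atLeast0LessThan)
      also have "\<dots> = (\<Sum>k<Suc (n+1). r $ k * y $ k)" by (simp add: add_2_eq_Suc')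
      also have "\<dots> = (\<Sum>k<n+1. r $ k * y $ k)" by (simp add: y_def)
      also have "\<dots> = (\<Sum>k<n+1. r $ k * f (Cm n K k))" by (intro sum.cong refl) (simp add: y_def)
      finally show ?thesis .
    qed
    have "mu n Y y Z = 1/2 * mtrace (Y * X) + r \<bullet> y" by (simp add: mu_def X_def r_def)
    also have "\<dots> = f M1 + f M2" unfolding tr f1 ry using L2 by simp
    finally show ?thesis using fZ by simp
  qed
  show ?thesis using Yo yc main by blast
qed

end

theorem proposition4:
  fixes n :: nat and Kt :: "real mat"
  assumes "Kt \<in> carrier_mat n n" and "transpose_mat Kt = Kt" and "Kt * Kt = 1\<^sub>m n"
  defines "K \<equiv> Kmat n Kt"
  shows "(\<forall>Y y. Y \<in> orth_alg (n+2) K \<and> y \<in> carrier_vec (n+2) \<longrightarrow> lin_functional n K (mu n Y y))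
       \<and> (\<forall>f. lin_functional n K f \<longrightarrow>
            (\<exists>Y y. Y \<in> orth_alg (n+2) K \<and> y \<in> carrier_vec (n+2) \<and> (\<forall>Z \<in> galg n K. f Z = mu n Y y Z)))
       \<and> (\<forall>Y y Y' y'. Y \<in> orth_alg (n+2) K \<and> y \<in> carrier_vec (n+2)
            \<and> Y' \<in> orth_alg (n+2) K \<and> y' \<in> carrier_vec (n+2) \<longrightarrow>
            (special_equiv n K Y y Y' y' \<longleftrightarrow> same_coadj_orbit n K (mu n Y y) (mu n Y' y')))"
proof -
  interpret KS n K
  proof
    show "K \<in> carrier_mat (n+2) (n+2)" unfolding K_def by (rule Kmat_carrier)
    show "transpose_mat K = K" unfolding K_def by (rule Kmat_sym[OF assms(1,2)])
    show "K * K = 1\<^sub>m (n+2)" unfolding K_def by (rule Kmat_sq[OF assms(1,3)])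
    show "K $$ (i, n+1) = (if i = 0 then 1 else 0)" if "i < n+2" for i
      using that unfolding K_def by (simp add: Kmat_def)
    show "K $$ (n+1, j) = (if j = 0 then 1 else 0)" if "j < n+2" for j
      using that unfolding K_def by (simp add: Kmat_def)
  qed
  show ?thesis
  proof (intro conjI allI impI)
    fix Y :: "real mat" and y :: "real vec" assume "Y \<in> orth_alg (n+2) K \<and> y \<in> carrier_vec (n+2)"
    then show "lin_functional n K (mu n Y y)" using mu_lin oa_c by blast
  next
    fix f :: "real mat \<Rightarrow> real" assume "lin_functional n K f"
    then show "\<exists>Y y. Y \<in> orth_alg (n+2) K \<and> y \<in> carrier_vec (n+2) \<and> (\<forall>Z \<in> galg n K. f Z = mu n Y y Z)"
      by (rule surj)
  next
    fix Y Y' :: "real mat" and y y' :: "real vec" assume H: "Y \<in> orth_alg (n+2) K \<and> y \<in> carrier_vec (n+2)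
            \<and> Y' \<in> orth_alg (n+2) K \<and> y' \<in> carrier_vec (n+2)"
    show "special_equiv n K Y y Y' y' \<longleftrightarrow> same_coadj_orbit n K (mu n Y y) (mu n Y' y')"
      using H fwd bwd by blast
  qed
qed

end
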